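(* Let $(A,\mu,E,\Delta,\epsilon)$ be a weak multiplier bialgebra over a field $k$. The following are equivalent: (1) $E=1$ in $\mathbb M(A\otimes A)$; (2) $\epsilon(ab)=\epsilon(a)\epsilon(b)$ for all $a,b\in A$; (3) $\overline\sqcap^L(a)=\epsilon(a)1$ in $\mathbb M(A)$ for all $a\in A$; (4) $\overline\sqcap^R(a)=\epsilon(a)1$ in $\mathbb M(A)$ for all $a\in A$.
   Context: Let $k$ be a field, $\otimes=\otimes_k$. A non-unital $k$-algebra $A$ with multiplication $\mu(a\otimes b)=ab$ is idempotent if $\mu$ is surjective and has non-degenerate multiplication if ($ab=0\ \forall a$)$\Rightarrow b=0$ and ($ba=0\ \forall a$)$\Rightarrow b=0$. Its multiplier algebra $\mathbb M(A)$ consists of pairs $(\lambda,\rho)$ of linear maps $A\to A$ with $a\lambda(b)=\rho(a)b$ (product $(\lambda',\rho')(\lambda,\rho)=(\lambda'\lambda,\rho\rho')$, unit $1=(\mathrm{id},\mathrm{id})$), containing $A$ as a dense two-sided ideal; $A\otimes A\subseteq\mathbb M(A)\otimes\mathbb M(A)\subseteq\mathbb M(A\otimes A)$. $\langle X\rangle$ is linear span; multiplicative $\gamma:A\to\mathbb M(B)$ with idempotent $e\in\mathbb M(B)$, $\langle\gamma(a)b\rangle=eB$, $\langle b\gamma(a)\rangle=Be$, extends uniquely to multiplicative $\overline\gamma:\mathbb M(A)\to\mathbb M(B)$ with $\overline\gamma(1)=e$. A weak multiplier bialgebra: idempotent $A$ with non-degenerate multiplication, idempotent $E\in\mathbb M(A\otimes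 A)$, multiplicative linear $\Delta:A\to\mathbb M(A\otimes A)$, linear $\epsilon:A\to k$ with: (i) $T_1(a\otimes b):=\Delta(a)(1\otimes b)$, $T_2(a\otimes b):=(a\otimes1)\Delta(b)$ lie in $A\otimes A$; (ii) $(T_2\otimes\mathrm{id})(\mathrm{id}\otimes T_1)=(\mathrm{id}\otimes T_1)(T_2\otimes\mathrm{id})$; (iii) $(\epsilon\otimes\mathrm{id})T_1=\mu=(\mathrm{id}\otimes\epsilon)T_2$; (iv) $\langle\Delta(a)(b\otimes b')\rangle=\langle E(b\otimes b')\rangle$ and $\langle(b\otimes b')\Delta(a)\rangle=\langle(b\otimes b')E\rangle$; (v) $(E\otimes1)(1\otimes E)=E^{(3)}=(1\otimes E)(E\otimes1)$ with $E^{(3)}:=(\overline{\mathrm{id}\otimes\Delta})(E)=(\overline{\Delta\otimes\mathrm{id}})(E)$; (vi) $(\epsilon\otimes\mathrm{id})((1\otimes a)E(b\otimes c))=(\epsilon\otimes\mathrm{id})(\Delta(a)(b\otimes c))$ and $(\epsilon\otimes\mathrm{id})((a\otimes b)E(1\otimes c))=(\epsilon\otimes\mathrm{id})((a\otimes b)\Delta(c))$. For $a\in A$: $\overline\sqcap^L(a)\in\mathbb M(A)$ is the multiplier with $\overline\sqcap^L(a)b=(\epsilon\otimes\mathrm{id})((a\otimes1)\Delta(b))$ and $b\overline\sqcap^L(a)=(\epsilon\otimes\mathrm{id})((a\otimes b)E)$; $\overline\sqcap^R(a)\in\mathbb M(A)$ is the multiplier with $b\overline\sqcap^R(a)=(\mathrm{id}\otimes\epsilon)(\Delta(b)(1\otimes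 a))$ and $\overline\sqcap^R(a)b=(\mathrm{id}\otimes\epsilon)(E(b\otimes a))$. *)

theory Defs
  imports Main "HOL-Library.Function_Algebras"
begin

text \<open>
  The algebra A is the type 'a
  (class ring, i.e. a possibly NON-unital associative ring; its multiplication is (*))
  together with a scalar multiplication sc :: 'k => 'a => 'a making it a k-algebra.

  A (x) A is modelled concretely (and canonically) as the linear span,
  inside the k-valued functions on pairs of maps A -> k, of the functions
  a (x) b := ((f,g) |-> f(a) g(b)) for linear functionals f,g (and 0 elsewhere).
  Since A (x) A -> (A* (x) A*)* is injective over a field, this span is (isomorphic to)
  A (x) A.  Likewise for A (x) A (x) A.  Linear maps out of tensor products are defined
  by the universal property (lift2, lift3), i.e. by multilinear extension; they are only
  applied to multilinear data.

  A multiplier of an algebra with carrier S, scalar action sc and product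
  mul is a pair (L,R) of linear maps S -> S with  mul a (L b) = mul (R a) b.  Since only
  the values on S matter, equality of multipliers is equality on S (meq).
\<close>

type_synonym ('k,'a) t2 = "('a \<Rightarrow> 'k) \<times> ('a \<Rightarrow> 'k) \<Rightarrow> 'k"
type_synonym ('k,'a) t3 = "('a \<Rightarrow> 'k) \<times> ('a \<Rightarrow> 'k) \<times> ('a \<Rightarrow> 'k) \<Rightarrow> 'k"
type_synonym 'v mlt = "('v \<Rightarrow> 'v) \<times> ('v \<Rightarrow> 'v)"

definition k_algebra :: "('k::field \<Rightarrow> 'a::ring \<Rightarrow> 'a) \<Rightarrow> bool" where
  "k_algebra sc \<longleftrightarrow>
     (\<forall>c x y. sc c (x + y) = sc c x + sc c y) \<and>
     (\<forall>c d x. sc (c + d) x = sc c x + sc d x) \<and>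
     (\<forall>c d x. sc c (sc d x) = sc (c * d) x) \<and>
     (\<forall>x. sc 1 x = x) \<and>
     (\<forall>c x y. sc c (x * y) = sc c x * y \<and> sc c (x * y) = x * sc c y)"

definition lin_fun :: "('k::field \<Rightarrow> 'a::ab_group_add \<Rightarrow> 'a) \<Rightarrow> ('a \<Rightarrow> 'k) \<Rightarrow> bool" where
  "lin_fun sc f \<longleftrightarrow> (\<forall>x y. f (x + y) = f x + f y) \<and> (\<forall>c x. f (sc c x) = c * f x)"

definition fsc :: "'k::field \<Rightarrow> ('x \<Rightarrow> 'k) \<Rightarrow> ('x \<Rightarrow> 'k)" where
  "fsc c t = (\<lambda>x. c * t x)"

definition fspan :: "('x \<Rightarrow> 'k::field) set \<Rightarrow> ('x \<Rightarrow> 'k) set" where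
  "fspan X = {(\<Sum>i<n. fsc (c i) (x i)) | (n::nat) c x. \<forall>i<n. x i \<in> X}"

section \<open>Tensor products A (x) A and A (x) A (x) A\<close>

definition tens2 :: "('k::field \<Rightarrow> 'a::ab_group_add \<Rightarrow> 'a) \<Rightarrow> 'a \<Rightarrow> 'a \<Rightarrow> ('k,'a) t2" where
  "tens2 sc a b = (\<lambda>(f,g). if lin_fun sc f \<and> lin_fun sc g then f a * g b else 0)"

definition tens3 :: "('k::field \<Rightarrow> 'a::ab_group_add \<Rightarrow> 'a) \<Rightarrow> 'a \<Rightarrow> 'a \<Rightarrow> 'a \<Rightarrow> ('k,'a) t3" where
  "tens3 sc a b c = (\<lambda>(f,g,h). if lin_fun sc f \<and> lin_fun sc g \<and> lin_fun sc h
                               then f a * g b * h c else 0)"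

definition TT2 :: "('k::field \<Rightarrow> 'a::ab_group_add \<Rightarrow> 'a) \<Rightarrow> ('k,'a) t2 set" where
  "TT2 sc = {(\<Sum>i<n. tens2 sc (a i) (b i)) | (n::nat) a b. True}"

definition TT3 :: "('k::field \<Rightarrow> 'a::ab_group_add \<Rightarrow> 'a) \<Rightarrow> ('k,'a) t3 set" where
  "TT3 sc = {(\<Sum>i<n. tens3 sc (a i) (b i) (c i)) | (n::nat) a b c. True}"

definition lift2 :: "('k::field \<Rightarrow> 'a::ab_group_add \<Rightarrow> 'a) \<Rightarrow> ('a \<Rightarrow> 'a \<Rightarrow> 'b::comm_monoid_add)
                      \<Rightarrow> ('k,'a) t2 \<Rightarrow> 'b" where
  "lift2 sc \<beta> t = (SOME v. \<exists>(n::nat) a b. t = (\<Sum>i<n. tens2 sc (a i) (b i)) \<and> v = (\<Sum>i<n. \<beta> (a i) (b i)))"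

definition lift3 :: "('k::field \<Rightarrow> 'a::ab_group_add \<Rightarrow> 'a) \<Rightarrow> ('a \<Rightarrow> 'a \<Rightarrow> 'a \<Rightarrow> 'b::comm_monoid_add)
                      \<Rightarrow> ('k,'a) t3 \<Rightarrow> 'b" where
  "lift3 sc \<beta> t = (SOME v. \<exists>(n::nat) a b c. t = (\<Sum>i<n. tens3 sc (a i) (b i) (c i))
                                   \<and> v = (\<Sum>i<n. \<beta> (a i) (b i) (c i)))"

definition mult2 :: "('k::field \<Rightarrow> 'a::ring \<Rightarrow> 'a) \<Rightarrow> ('k,'a) t2 \<Rightarrow> ('k,'a) t2 \<Rightarrow> ('k,'a) t2" where
  "mult2 sc t s = lift2 sc (\<lambda>a b. lift2 sc (\<lambda>c d. tens2 sc (a * c) (b * d)) s) t"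

definition mult3 :: "('k::field \<Rightarrow> 'a::ring \<Rightarrow> 'a) \<Rightarrow> ('k,'a) t3 \<Rightarrow> ('k,'a) t3 \<Rightarrow> ('k,'a) t3" where
  "mult3 sc t s = lift3 sc (\<lambda>a b c. lift3 sc (\<lambda>a' b' c'. tens3 sc (a * a') (b * b') (c * c')) s) t"

definition ltens :: "('k::field \<Rightarrow> 'a::ab_group_add \<Rightarrow> 'a) \<Rightarrow> 'a \<Rightarrow> ('k,'a) t2 \<Rightarrow> ('k,'a) t3" where
  "ltens sc x s = lift2 sc (\<lambda>y z. tens3 sc x y z) s"

definition rtens :: "('k::field \<Rightarrow> 'a::ab_group_add \<Rightarrow> 'a) \<Rightarrow> ('k,'a) t2 \<Rightarrow> 'a \<Rightarrow> ('k,'a) t3" where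
  "rtens sc s z = lift2 sc (\<lambda>x y. tens3 sc x y z) s"

definition id_tensor :: "('k::field \<Rightarrow> 'a::ab_group_add \<Rightarrow> 'a) \<Rightarrow> (('k,'a) t2 \<Rightarrow> ('k,'a) t2)
                          \<Rightarrow> ('k,'a) t3 \<Rightarrow> ('k,'a) t3" where
  "id_tensor sc F = lift3 sc (\<lambda>x y z. ltens sc x (F (tens2 sc y z)))"

definition tensor_id :: "('k::field \<Rightarrow> 'a::ab_group_add \<Rightarrow> 'a) \<Rightarrow> (('k,'a) t2 \<Rightarrow> ('k,'a) t2)
                          \<Rightarrow> ('k,'a) t3 \<Rightarrow> ('k,'a) t3" where
  "tensor_id sc F = lift3 sc (\<lambda>x y z. rtens sc (F (tens2 sc x y)) z)"

definition mu :: "('k::field \<Rightarrow> 'a::ring \<Rightarrow> 'a) \<Rightarrow> ('k,'a) t2 \<Rightarrow> 'a" where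
  "mu sc = lift2 sc (\<lambda>a b. a * b)"

definition eps_id :: "('k::field \<Rightarrow> 'a::ring \<Rightarrow> 'a) \<Rightarrow> ('a \<Rightarrow> 'k) \<Rightarrow> ('k,'a) t2 \<Rightarrow> 'a" where
  "eps_id sc \<epsilon> = lift2 sc (\<lambda>a b. sc (\<epsilon> a) b)"

definition id_eps :: "('k::field \<Rightarrow> 'a::ring \<Rightarrow> 'a) \<Rightarrow> ('a \<Rightarrow> 'k) \<Rightarrow> ('k,'a) t2 \<Rightarrow> 'a" where
  "id_eps sc \<epsilon> = lift2 sc (\<lambda>a b. sc (\<epsilon> b) a)"

section \<open>Multipliers\<close>

definition is_mlt :: "'v set \<Rightarrow> ('k \<Rightarrow> 'v \<Rightarrow> 'v) \<Rightarrow> ('v \<Rightarrow> 'v \<Rightarrow> 'v) \<Rightarrow> ('v::plus) mlt \<Rightarrow> bool" where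
  "is_mlt S sc mul m \<longleftrightarrow>
     (\<forall>x\<in>S. fst m x \<in> S \<and> snd m x \<in> S) \<and>
     (\<forall>x\<in>S. \<forall>y\<in>S. fst m (x + y) = fst m x + fst m y \<and> snd m (x + y) = snd m x + snd m y) \<and>
     (\<forall>c. \<forall>x\<in>S. fst m (sc c x) = sc c (fst m x) \<and> snd m (sc c x) = sc c (snd m x)) \<and>
     (\<forall>a\<in>S. \<forall>b\<in>S. mul a (fst m b) = mul (snd m a) b)"

definition meq :: "'v set \<Rightarrow> 'v mlt \<Rightarrow> 'v mlt \<Rightarrow> bool" where
  "meq S m m' \<longleftrightarrow> (\<forall>x\<in>S. fst m x = fst m' x \<and> snd m x = snd m' x)"

definition mprod :: "'v mlt \<Rightarrow> 'v mlt \<Rightarrow> 'v mlt" where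
  "mprod m' m = (fst m' \<circ> fst m, snd m \<circ> snd m')"

definition mone :: "'v mlt" where
  "mone = (id, id)"

definition madd :: "('v::plus) mlt \<Rightarrow> 'v mlt \<Rightarrow> 'v mlt" where
  "madd m m' = ((\<lambda>x. fst m x + fst m' x), (\<lambda>x. snd m x + snd m' x))"

definition msc :: "('k \<Rightarrow> 'v \<Rightarrow> 'v) \<Rightarrow> 'k \<Rightarrow> 'v mlt \<Rightarrow> 'v mlt" where
  "msc sc c m = ((\<lambda>x. sc c (fst m x)), (\<lambda>x. sc c (snd m x)))"

definition membed :: "('v \<Rightarrow> 'v \<Rightarrow> 'v) \<Rightarrow> 'v \<Rightarrow> 'v mlt" where
  "membed mul a = (mul a, \<lambda>x. mul x a)"

definition one_tens :: "('k::field \<Rightarrow> 'a::ring \<Rightarrow> 'a) \<Rightarrow> 'a \<Rightarrow> ('k,'a) t2 mlt" where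
  "one_tens sc b = (lift2 sc (\<lambda>x y. tens2 sc x (b * y)), lift2 sc (\<lambda>x y. tens2 sc x (y * b)))"

definition tens_one :: "('k::field \<Rightarrow> 'a::ring \<Rightarrow> 'a) \<Rightarrow> 'a \<Rightarrow> ('k,'a) t2 mlt" where
  "tens_one sc a = (lift2 sc (\<lambda>x y. tens2 sc (a * x) y), lift2 sc (\<lambda>x y. tens2 sc (x * a) y))"

definition E_tens_one :: "('k::field \<Rightarrow> 'a::ring \<Rightarrow> 'a) \<Rightarrow> ('k,'a) t2 mlt \<Rightarrow> ('k,'a) t3 mlt" where
  "E_tens_one sc E = (lift3 sc (\<lambda>x y z. rtens sc (fst E (tens2 sc x y)) z),
                      lift3 sc (\<lambda>x y z. rtens sc (snd E (tens2 sc x y)) z))"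

definition one_tens_E :: "('k::field \<Rightarrow> 'a::ring \<Rightarrow> 'a) \<Rightarrow> ('k,'a) t2 mlt \<Rightarrow> ('k,'a) t3 mlt" where
  "one_tens_E sc E = (lift3 sc (\<lambda>x y z. ltens sc x (fst E (tens2 sc y z))),
                      lift3 sc (\<lambda>x y z. ltens sc x (snd E (tens2 sc y z))))"

text \<open>id (x) Delta and Delta (x) id : A (x) A -> M(A (x) A (x) A),
  x (x) y |-> x (x) Delta(y)  resp.  Delta(x) (x) y\<close>
definition id_tens_Delta :: "('k::field \<Rightarrow> 'a::ring \<Rightarrow> 'a) \<Rightarrow> ('a \<Rightarrow> ('k,'a) t2 mlt)
                              \<Rightarrow> ('k,'a) t2 \<Rightarrow> ('k,'a) t3 mlt" where
  "id_tens_Delta sc \<Delta> t =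
     ((\<lambda>w. lift2 sc (\<lambda>x y. lift3 sc (\<lambda>u v r. ltens sc (x * u) (fst (\<Delta> y) (tens2 sc v r))) w) t),
      (\<lambda>w. lift2 sc (\<lambda>x y. lift3 sc (\<lambda>u v r. ltens sc (u * x) (snd (\<Delta> y) (tens2 sc v r))) w) t))"

definition Delta_tens_id :: "('k::field \<Rightarrow> 'a::ring \<Rightarrow> 'a) \<Rightarrow> ('a \<Rightarrow> ('k,'a) t2 mlt)
                              \<Rightarrow> ('k,'a) t2 \<Rightarrow> ('k,'a) t3 mlt" where
  "Delta_tens_id sc \<Delta> t =
     ((\<lambda>w. lift2 sc (\<lambda>x y. lift3 sc (\<lambda>u v r. rtens sc (fst (\<Delta> x) (tens2 sc u v)) (y * r)) w) t),
      (\<lambda>w. lift2 sc (\<lambda>x y. lift3 sc (\<lambda>u v r. rtens sc (snd (\<Delta> x) (tens2 sc u v)) (r * y)) w) t))"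

text \<open>X is the value at the multiplier m of the extension gamma-bar : M(A (x) A) -> M(A (x) A (x) A)
  of a multiplicative gamma with gamma-bar(1) = e; it is characterised by
  X = X e = e X,  X (gamma(t) w) = gamma(m t) w  and  (w gamma(t)) X = w gamma(t m).\<close>
definition ext_value :: "('k::field \<Rightarrow> 'a::ring \<Rightarrow> 'a) \<Rightarrow> (('k,'a) t2 \<Rightarrow> ('k,'a) t3 mlt)
                          \<Rightarrow> ('k,'a) t3 mlt \<Rightarrow> ('k,'a) t2 mlt \<Rightarrow> ('k,'a) t3 mlt \<Rightarrow> bool" where
  "ext_value sc \<gamma> e m X \<longleftrightarrow>
     is_mlt (TT3 sc) fsc (mult3 sc) X \<and>
     meq (TT3 sc) (mprod X e) X \<and> meq (TT3 sc) (mprod e X) X \<and>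
     (\<forall>t\<in>TT2 sc. \<forall>w\<in>TT3 sc.
        fst X (fst (\<gamma> t) w) = fst (\<gamma> (fst m t)) w \<and>
        snd X (snd (\<gamma> t) w) = snd (\<gamma> (snd m t)) w)"

definition T1el :: "('k::field \<Rightarrow> 'a::ring \<Rightarrow> 'a) \<Rightarrow> ('a \<Rightarrow> ('k,'a) t2 mlt) \<Rightarrow> 'a \<Rightarrow> 'a \<Rightarrow> ('k,'a) t2" where
  "T1el sc \<Delta> a b = (THE s. s \<in> TT2 sc \<and>
        meq (TT2 sc) (mprod (\<Delta> a) (one_tens sc b)) (membed (mult2 sc) s))"

definition T2el :: "('k::field \<Rightarrow> 'a::ring \<Rightarrow> 'a) \<Rightarrow> ('a \<Rightarrow> ('k,'a) t2 mlt) \<Rightarrow> 'a \<Rightarrow> 'a \<Rightarrow> ('k,'a) t2" where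
  "T2el sc \<Delta> a b = (THE s. s \<in> TT2 sc \<and>
        meq (TT2 sc) (mprod (tens_one sc a) (\<Delta> b)) (membed (mult2 sc) s))"

definition T1 :: "('k::field \<Rightarrow> 'a::ring \<Rightarrow> 'a) \<Rightarrow> ('a \<Rightarrow> ('k,'a) t2 mlt) \<Rightarrow> ('k,'a) t2 \<Rightarrow> ('k,'a) t2" where
  "T1 sc \<Delta> = lift2 sc (T1el sc \<Delta>)"

definition T2 :: "('k::field \<Rightarrow> 'a::ring \<Rightarrow> 'a) \<Rightarrow> ('a \<Rightarrow> ('k,'a) t2 mlt) \<Rightarrow> ('k,'a) t2 \<Rightarrow> ('k,'a) t2" where
  "T2 sc \<Delta> = lift2 sc (T2el sc \<Delta>)"

section \<open>Weak multiplier bialgebras\<close>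

definition weak_multiplier_bialgebra ::
  "('k::field \<Rightarrow> 'a::ring \<Rightarrow> 'a) \<Rightarrow> ('k,'a) t2 mlt \<Rightarrow> ('a \<Rightarrow> ('k,'a) t2 mlt) \<Rightarrow> ('a \<Rightarrow> 'k) \<Rightarrow> bool" where
  "weak_multiplier_bialgebra sc E \<Delta> \<epsilon> \<longleftrightarrow>
     k_algebra sc \<and>
     \<comment> \<open>A idempotent: mu surjective\<close>
     (\<forall>c::'a. \<exists>(n::nat) a b. c = (\<Sum>i<n. a i * b i)) \<and>
     \<comment> \<open>non-degenerate multiplication\<close>
     (\<forall>b::'a. (\<forall>a. a * b = 0) \<longrightarrow> b = 0) \<and> (\<forall>b::'a. (\<forall>a. b * a = 0) \<longrightarrow> b = 0) \<and>
     \<comment> \<open>E idempotent element of M(A (x) A)\<close>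
     is_mlt (TT2 sc) fsc (mult2 sc) E \<and> meq (TT2 sc) (mprod E E) E \<and>
     \<comment> \<open>Delta : A -> M(A (x) A) multiplicative and linear\<close>
     (\<forall>a. is_mlt (TT2 sc) fsc (mult2 sc) (\<Delta> a)) \<and>
     (\<forall>a b. meq (TT2 sc) (\<Delta> (a * b)) (mprod (\<Delta> a) (\<Delta> b))) \<and>
     (\<forall>a b. meq (TT2 sc) (\<Delta> (a + b)) (madd (\<Delta> a) (\<Delta> b))) \<and>
     (\<forall>c a. meq (TT2 sc) (\<Delta> (sc c a)) (msc fsc c (\<Delta> a))) \<and>
     \<comment> \<open>epsilon linear\<close>
     lin_fun sc \<epsilon> \<and>
     \<comment> \<open>(i)\<close>
     (\<forall>a b. \<exists>s\<in>TT2 sc. meq (TT2 sc) (mprod (\<Delta> a) (one_tens sc b)) (membed (mult2 sc) s)) \<and>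
     (\<forall>a b. \<exists>s\<in>TT2 sc. meq (TT2 sc) (mprod (tens_one sc a) (\<Delta> b)) (membed (mult2 sc) s)) \<and>
     \<comment> \<open>(ii)\<close>
     (\<forall>w\<in>TT3 sc. tensor_id sc (T2 sc \<Delta>) (id_tensor sc (T1 sc \<Delta>) w)
                = id_tensor sc (T1 sc \<Delta>) (tensor_id sc (T2 sc \<Delta>) w)) \<and>
     \<comment> \<open>(iii)\<close>
     (\<forall>t\<in>TT2 sc. eps_id sc \<epsilon> (T1 sc \<Delta> t) = mu sc t \<and> id_eps sc \<epsilon> (T2 sc \<Delta> t) = mu sc t) \<and>
     \<comment> \<open>(iv)\<close>
     fspan {fst (\<Delta> a) (tens2 sc b b') | a b b'. True} = fspan {fst E (tens2 sc b b') | b b'. True} \<and>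
     fspan {snd (\<Delta> a) (tens2 sc b b') | a b b'. True} = fspan {snd E (tens2 sc b b') | b b'. True} \<and>
     \<comment> \<open>(v)\<close>
     (\<exists>X. ext_value sc (id_tens_Delta sc \<Delta>) (one_tens_E sc E) E X \<and>
          ext_value sc (Delta_tens_id sc \<Delta>) (E_tens_one sc E) E X \<and>
          meq (TT3 sc) (mprod (E_tens_one sc E) (one_tens_E sc E)) X \<and>
          meq (TT3 sc) (mprod (one_tens_E sc E) (E_tens_one sc E)) X) \<and>
     \<comment> \<open>(vi)\<close>
     (\<forall>a b c. eps_id sc \<epsilon> (fst (one_tens sc a) (fst E (tens2 sc b c)))
              = eps_id sc \<epsilon> (fst (\<Delta> a) (tens2 sc b c))) \<and>
     (\<forall>a b c. eps_id sc \<epsilon> (snd (one_tens sc c) (snd E (tens2 sc a b)))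
              = eps_id sc \<epsilon> (snd (\<Delta> c) (tens2 sc a b)))"

definition PiL :: "('k::field \<Rightarrow> 'a::ring \<Rightarrow> 'a) \<Rightarrow> ('k,'a) t2 mlt \<Rightarrow> ('a \<Rightarrow> ('k,'a) t2 mlt)
                    \<Rightarrow> ('a \<Rightarrow> 'k) \<Rightarrow> 'a \<Rightarrow> 'a mlt" where
  "PiL sc E \<Delta> \<epsilon> a = ((\<lambda>b. eps_id sc \<epsilon> (T2 sc \<Delta> (tens2 sc a b))),
                      (\<lambda>b. eps_id sc \<epsilon> (snd E (tens2 sc a b))))"

definition PiR :: "('k::field \<Rightarrow> 'a::ring \<Rightarrow> 'a) \<Rightarrow> ('k,'a) t2 mlt \<Rightarrow> ('a \<Rightarrow> ('k,'a) t2 mlt)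
                    \<Rightarrow> ('a \<Rightarrow> 'k) \<Rightarrow> 'a \<Rightarrow> 'a mlt" where
  "PiR sc E \<Delta> \<epsilon> a = ((\<lambda>b. id_eps sc \<epsilon> (fst E (tens2 sc b a))),
                      (\<lambda>b. id_eps sc \<epsilon> (T1 sc \<Delta> (tens2 sc b a))))"

end

theory Submission
  imports Defs "HOL.Vector_Spaces"
begin


lemma vs_field: "vector_space ((*) :: 'k::field \<Rightarrow> 'k \<Rightarrow> 'k)"
  unfolding vector_space_def by (simp add: algebra_simps)

locale kalg =
  fixes sc :: "'k::field \<Rightarrow> 'a::ring \<Rightarrow> 'a"
  assumes kalg: "k_algebra sc"
begin

lemma sc_add_r: "sc c (x + y) = sc c x + sc c y" using kalg unfolding k_algebra_def by blast
lemma sc_add_l: "sc (c + d) x = sc c x + sc d x" using kalg unfolding k_algebra_def by blast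
lemma sc_sc: "sc c (sc d x) = sc (c * d) x" using kalg unfolding k_algebra_def by blast
lemma sc_one: "sc 1 x = x" using kalg unfolding k_algebra_def by blast
lemma sc_mult_l: "sc c (x * y) = sc c x * y" using kalg unfolding k_algebra_def by blast
lemma sc_mult_r: "sc c (x * y) = x * sc c y" using kalg unfolding k_algebra_def by blast

lemma vs: "vector_space sc"
  unfolding vector_space_def using sc_add_r sc_add_l sc_sc sc_one by blast

sublocale V: vector_space sc by (rule vs)

lemma sc_zero_r[simp]: "sc c 0 = 0" by (rule V.scale_zero_right)
lemma sc_zero_l[simp]: "sc 0 x = 0" by (rule V.scale_zero_left)
lemma sc_minus_r: "sc c (- x) = - sc c x" by (rule V.scale_minus_right)
lemma sc_sum_r: "sc c (\<Sum>i\<in>I. f i) = (\<Sum>i\<in>I. sc c (f i))" by (rule V.scale_sum_right)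
lemma sc_sum_l: "sc (\<Sum>i\<in>I. f i) x = (\<Sum>i\<in>I. sc (f i) x)" by (rule V.scale_sum_left)

lemma lin_fun_linear: "lin_fun sc f \<longleftrightarrow> Vector_Spaces.linear sc (*) f"
  unfolding lin_fun_def using linear_iff[of sc "(*)" f] vs vs_field by blast

lemma lin_add: "lin_fun sc f \<Longrightarrow> f (x + y) = f x + f y" unfolding lin_fun_def by blast
lemma lin_sc: "lin_fun sc f \<Longrightarrow> f (sc c x) = c * f x" unfolding lin_fun_def by blast
lemma lin_zero: "lin_fun sc f \<Longrightarrow> f 0 = 0"
  using lin_sc[of f 0 0] by simp
lemma lin_minus: "lin_fun sc f \<Longrightarrow> f (- x) = - f x"
  using lin_add[of f x "-x"] lin_zero[of f] by (simp add: eq_neg_iff_add_eq_0 add.commute)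
lemma lin_sum: "lin_fun sc f \<Longrightarrow> f (\<Sum>i\<in>I. g i) = (\<Sum>i\<in>I. f (g i))"
  by (induction I rule: infinite_finite_induct) (auto simp: lin_zero lin_add)

definition BB where "BB = V.extend_basis {}"
definition rep where "rep x e = V.representation BB x e"

lemma BB_indep: "V.independent BB" unfolding BB_def by (rule V.independent_extend_basis) (rule V.independent_empty)
lemma BB_span: "V.span BB = UNIV" unfolding BB_def by (rule V.span_extend_basis) (rule V.independent_empty)

lemma lin_rep: "lin_fun sc (\<lambda>x. rep x e)"
  unfolding lin_fun_linear rep_def by (rule V.linear_representation[OF BB_indep BB_span])

lemma rep_expand:
  assumes "finite F" "{e. rep x e \<noteq> 0} \<subseteq> F"
  shows "(\<Sum>e\<in>F. sc (rep x e) e) = x"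
proof -
  have "(\<Sum>e\<in>F. sc (rep x e) e) = (\<Sum>e | rep x e \<noteq> 0. sc (rep x e) e)"
    by (rule sum.mono_neutral_right) (use assms in auto)
  also have "\<dots> = x" unfolding rep_def
    by (rule V.sum_nonzero_representation_eq[OF BB_indep]) (simp add: BB_span)
  finally show ?thesis .
qed

lemma rep_finite: "finite {e. rep x e \<noteq> 0}"
  unfolding rep_def by (rule V.finite_representation)

lemma separate: assumes "\<And>f. lin_fun sc f \<Longrightarrow> f x = 0" shows "x = 0"
proof -
  have "\<And>e. rep x e = 0" using assms[OF lin_rep] .
  hence "{e. rep x e \<noteq> 0} = {}" by auto
  hence "x = (\<Sum>e\<in>{}. sc (rep x e) e)" using rep_expand[of "{}" x] by simp
  thus ?thesis by simp
qed


lemma fsum_apply: "(\<Sum>i\<in>I. (g i :: 'x \<Rightarrow> 'y::comm_monoid_add)) x = (\<Sum>i\<in>I. g i x)"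
  by (induction I rule: infinite_finite_induct) auto

lemma tens2_app: "lin_fun sc f \<Longrightarrow> lin_fun sc g \<Longrightarrow> tens2 sc a b (f, g) = f a * g b"
  unfolding tens2_def by simp

lemma tens2_add_l: "tens2 sc (a + a') b = tens2 sc a b + tens2 sc a' b"
  unfolding tens2_def by (auto simp: fun_eq_iff lin_add algebra_simps)
lemma tens2_add_r: "tens2 sc a (b + b') = tens2 sc a b + tens2 sc a b'"
  unfolding tens2_def by (auto simp: fun_eq_iff lin_add algebra_simps)
lemma tens2_sc_l: "tens2 sc (sc c a) b = fsc c (tens2 sc a b)"
  unfolding tens2_def fsc_def by (auto simp: fun_eq_iff lin_sc algebra_simps)
lemma tens2_sc_r: "tens2 sc a (sc c b) = fsc c (tens2 sc a b)"
  unfolding tens2_def fsc_def by (auto simp: fun_eq_iff lin_sc algebra_simps)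
lemma tens2_zero_l[simp]: "tens2 sc 0 b = 0"
  unfolding tens2_def by (auto simp: fun_eq_iff lin_zero)
lemma tens2_zero_r[simp]: "tens2 sc a 0 = 0"
  unfolding tens2_def by (auto simp: fun_eq_iff lin_zero)
lemma tens2_minus_l: "tens2 sc (- a) b = - tens2 sc a b"
  unfolding tens2_def by (auto simp: fun_eq_iff lin_minus)
lemma tens2_minus_r: "tens2 sc a (- b) = - tens2 sc a b"
  unfolding tens2_def by (auto simp: fun_eq_iff lin_minus)

lemma tens3_app: "lin_fun sc f \<Longrightarrow> lin_fun sc g \<Longrightarrow> lin_fun sc h \<Longrightarrow>
   tens3 sc a b c (f, g, h) = f a * g b * h c"
  unfolding tens3_def by simp
lemma tens3_add_1: "tens3 sc (a + a') b c = tens3 sc a b c + tens3 sc a' b c"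
  unfolding tens3_def by (auto simp: fun_eq_iff lin_add algebra_simps)
lemma tens3_add_2: "tens3 sc a (b + b') c = tens3 sc a b c + tens3 sc a b' c"
  unfolding tens3_def by (auto simp: fun_eq_iff lin_add algebra_simps)
lemma tens3_add_3: "tens3 sc a b (c + c') = tens3 sc a b c + tens3 sc a b c'"
  unfolding tens3_def by (auto simp: fun_eq_iff lin_add algebra_simps)
lemma tens3_sc_1: "tens3 sc (sc k a) b c = fsc k (tens3 sc a b c)"
  unfolding tens3_def fsc_def by (auto simp: fun_eq_iff lin_sc algebra_simps)
lemma tens3_sc_2: "tens3 sc a (sc k b) c = fsc k (tens3 sc a b c)"
  unfolding tens3_def fsc_def by (auto simp: fun_eq_iff lin_sc algebra_simps)
lemma tens3_sc_3: "tens3 sc a b (sc k c) = fsc k (tens3 sc a b c)"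
  unfolding tens3_def fsc_def by (auto simp: fun_eq_iff lin_sc algebra_simps)
lemma tens3_minus_1: "tens3 sc (- a) b c = - tens3 sc a b c"
  unfolding tens3_def by (auto simp: fun_eq_iff lin_minus)

definition bil :: "('a \<Rightarrow> 'a \<Rightarrow> 'b::ab_group_add) \<Rightarrow> bool" where
  "bil \<beta> \<longleftrightarrow> (\<forall>a a' b. \<beta> (a + a') b = \<beta> a b + \<beta> a' b) \<and>
             (\<forall>a b b'. \<beta> a (b + b') = \<beta> a b + \<beta> a b') \<and>
             (\<forall>c a b. \<beta> (sc c a) b = \<beta> a (sc c b))"

lemma bilI:
  assumes "\<And>a a' b. \<beta> (a + a') b = \<beta> a b + \<beta> a' b"
    "\<And>a b b'. \<beta> a (b + b') = \<beta> a b + \<beta> a b'"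
    "\<And>c a b. \<beta> (sc c a) b = \<beta> a (sc c b)"
  shows "bil \<beta>" unfolding bil_def using assms by blast

lemma bil_sum_l:
  assumes "bil \<beta>" shows "\<beta> (\<Sum>i\<in>I. g i) b = (\<Sum>i\<in>I. \<beta> (g i) b)"
proof -
  have z: "\<beta> 0 b = 0" using assms unfolding bil_def by (metis add_0 add_cancel_right_left)
  show ?thesis using assms unfolding bil_def
    by (induction I rule: infinite_finite_induct) (auto simp: z)
qed

lemma bil_sum_r:
  assumes "bil \<beta>" shows "\<beta> a (\<Sum>i\<in>I. g i) = (\<Sum>i\<in>I. \<beta> a (g i))"
proof -
  have z: "\<beta> a 0 = 0" using assms unfolding bil_def by (metis add_0 add_cancel_right_left)
  show ?thesis using assms unfolding bil_def
    by (induction I rule: infinite_finite_induct) (auto simp: z)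
qed

lemma zero2:
  assumes b: "bil \<beta>" and z: "(\<Sum>i<(n::nat). tens2 sc (a i) (b i)) = 0"
  shows "(\<Sum>i<n. \<beta> (a i) (b i)) = 0"
proof -
  define F where "F = (\<Union>i<n. {e. rep (b i) e \<noteq> 0})"
  have fF: "finite F" unfolding F_def by (intro finite_UN_I rep_finite) simp
  have exp: "b i = (\<Sum>e\<in>F. sc (rep (b i) e) e)" if "i < n" for i
    by (rule rep_expand[symmetric]) (use fF that in \<open>auto simp: F_def\<close>)
  have coef: "(\<Sum>i<n. sc (rep (b i) e) (a i)) = 0" for e
  proof (rule separate)
    fix f assume f: "lin_fun sc f"
    have "f (\<Sum>i<n. sc (rep (b i) e) (a i)) = (\<Sum>i<n. f (a i) * rep (b i) e)"
      by (simp add: lin_sum[OF f] lin_sc[OF f] mult.commute)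
    also have "\<dots> = (\<Sum>i<n. tens2 sc (a i) (b i)) (f, \<lambda>x. rep x e)"
      by (simp add: fsum_apply tens2_app[OF f lin_rep])
    also have "\<dots> = 0" using z by simp
    finally show "f (\<Sum>i<n. sc (rep (b i) e) (a i)) = 0" .
  qed
  have bal: "\<beta> (sc c x) y = \<beta> x (sc c y)" for c x y using b unfolding bil_def by blast
  have "(\<Sum>i<n. \<beta> (a i) (b i)) = (\<Sum>i<n. \<Sum>e\<in>F. \<beta> (sc (rep (b i) e) (a i)) e)"
  proof (rule sum.cong[OF refl])
    fix i assume "i \<in> {..<n}"
    hence "\<beta> (a i) (b i) = \<beta> (a i) (\<Sum>e\<in>F. sc (rep (b i) e) e)" using exp by simp
    also have "\<dots> = (\<Sum>e\<in>F. \<beta> (sc (rep (b i) e) (a i)) e)"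
      by (simp add: bil_sum_r[OF b] bal)
    finally show "\<beta> (a i) (b i) = (\<Sum>e\<in>F. \<beta> (sc (rep (b i) e) (a i)) e)" .
  qed
  also have "\<dots> = (\<Sum>e\<in>F. \<Sum>i<n. \<beta> (sc (rep (b i) e) (a i)) e)" by (rule sum.swap)
  also have "\<dots> = (\<Sum>e\<in>F. \<beta> (\<Sum>i<n. sc (rep (b i) e) (a i)) e)"
    by (simp add: bil_sum_l[OF b])
  also have "\<dots> = (\<Sum>e\<in>F. \<beta> 0 e)" by (simp add: coef)
  also have "\<dots> = 0" using bil_sum_l[OF b, of "\<lambda>i. 0" "{}"] by simp
  finally show ?thesis .
qed


lemma sum_split: "(\<Sum>i<n + (m::nat). (g i::'b::comm_monoid_add)) = (\<Sum>i<n. g i) + (\<Sum>i<m. g (n + i))"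
  by (induction m) (auto simp: add.assoc)

lemma key2:
  assumes b: "bil \<beta>"
    and eq: "(\<Sum>i<(n::nat). tens2 sc (a i) (b i)) = (\<Sum>i<(m::nat). tens2 sc (c i) (d i))"
  shows "(\<Sum>i<n. \<beta> (a i) (b i)) = (\<Sum>i<m. \<beta> (c i) (d i))"
proof -
  define a2 where "a2 i = (if i < n then a i else - c (i - n))" for i
  define b2 where "b2 i = (if i < n then b i else d (i - n))" for i
  have neg: "\<beta> (- x) y = - \<beta> x y" for x y
  proof -
    have z: "\<beta> 0 y = 0" using bil_sum_l[OF b, of "\<lambda>i. 0" "{}"] by simp
    have "\<beta> (x + - x) y = \<beta> x y + \<beta> (- x) y" using b unfolding bil_def by blast
    thus ?thesis using z by (simp add: eq_neg_iff_add_eq_0 add.commute)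
  qed
  have "(\<Sum>i<n + m. tens2 sc (a2 i) (b2 i)) = (\<Sum>i<n. tens2 sc (a i) (b i)) - (\<Sum>i<m. tens2 sc (c i) (d i))"
    unfolding sum_split a2_def b2_def by (simp add: tens2_minus_l sum_negf)
  hence "(\<Sum>i<n + m. \<beta> (a2 i) (b2 i)) = 0" using eq by (intro zero2[OF b]) simp
  hence "(\<Sum>i<n. \<beta> (a i) (b i)) - (\<Sum>i<m. \<beta> (c i) (d i)) = 0"
    unfolding sum_split a2_def b2_def by (simp add: neg sum_negf)
  thus ?thesis by simp
qed

lemma lift2_sum:
  assumes b: "bil \<beta>"
  shows "lift2 sc \<beta> (\<Sum>i<(n::nat). tens2 sc (a i) (b i)) = (\<Sum>i<n. \<beta> (a i) (b i))"
  unfolding lift2_def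
proof (rule someI2)
  show "\<exists>n' a' b'. (\<Sum>i<n. tens2 sc (a i) (b i)) = (\<Sum>i<(n'::nat). tens2 sc (a' i) (b' i)) \<and>
          (\<Sum>i<n. \<beta> (a i) (b i)) = (\<Sum>i<n'. \<beta> (a' i) (b' i))" by (intro exI[of _ n] exI[of _ a] exI[of _ b] conjI refl)
next
  fix v assume "\<exists>n' a' b'. (\<Sum>i<n. tens2 sc (a i) (b i)) = (\<Sum>i<(n'::nat). tens2 sc (a' i) (b' i)) \<and>
          v = (\<Sum>i<n'. \<beta> (a' i) (b' i))"
  then obtain n' a' b' where e1: "(\<Sum>i<n. tens2 sc (a i) (b i)) = (\<Sum>i<(n'::nat). tens2 sc (a' i) (b' i))"
     and e2: "v = (\<Sum>i<n'. \<beta> (a' i) (b' i))" by blast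
  show "v = (\<Sum>i<n. \<beta> (a i) (b i))" unfolding e2 using key2[OF b e1] by simp
qed

lemma lift2_single: "bil \<beta> \<Longrightarrow> lift2 sc \<beta> (tens2 sc a b) = \<beta> a b"
proof -
  assume b: "bil \<beta>"
  have "tens2 sc a b = (\<Sum>i<(1::nat). tens2 sc ((\<lambda>_. a) i) ((\<lambda>_. b) i))" by simp
  thus ?thesis using lift2_sum[OF b, where n=1 and a="\<lambda>_. a" and b="\<lambda>_. b"] by simp
qed


definition tri :: "('a \<Rightarrow> 'a \<Rightarrow> 'a \<Rightarrow> 'b::ab_group_add) \<Rightarrow> bool" where
  "tri \<beta> \<longleftrightarrow> (\<forall>a a' b d. \<beta> (a + a') b d = \<beta> a b d + \<beta> a' b d) \<and>
             (\<forall>a b b' d. \<beta> a (b + b') d = \<beta> a b d + \<beta> a b' d) \<and>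
             (\<forall>a b d d'. \<beta> a b (d + d') = \<beta> a b d + \<beta> a b d') \<and>
             (\<forall>c a b d. \<beta> (sc c a) b d = \<beta> a (sc c b) d) \<and>
             (\<forall>c a b d. \<beta> a (sc c b) d = \<beta> a b (sc c d))"

lemma triI:
  assumes "\<And>a a' b d. \<beta> (a + a') b d = \<beta> a b d + \<beta> a' b d"
    "\<And>a b b' d. \<beta> a (b + b') d = \<beta> a b d + \<beta> a b' d"
    "\<And>a b d d'. \<beta> a b (d + d') = \<beta> a b d + \<beta> a b d'"
    "\<And>c a b d. \<beta> (sc c a) b d = \<beta> a (sc c b) d"
    "\<And>c a b d. \<beta> a (sc c b) d = \<beta> a b (sc c d)"
  shows "tri \<beta>" unfolding tri_def using assms by blast

lemma tri_bil: "tri \<beta> \<Longrightarrow> bil (\<lambda>x y. \<beta> x y e)"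
  unfolding tri_def bil_def by blast
lemma tri_bil23: "tri \<beta> \<Longrightarrow> bil (\<lambda>y z. \<beta> x y z)"
  unfolding tri_def bil_def by blast
lemma tri_bil3: "tri \<beta> \<Longrightarrow> bil (\<lambda>x z. \<beta> x y z)"
  unfolding tri_def bil_def by metis

lemma zero3:
  assumes b: "tri \<beta>" and z: "(\<Sum>i<(n::nat). tens3 sc (a i) (b i) (c i)) = 0"
  shows "(\<Sum>i<n. \<beta> (a i) (b i) (c i)) = 0"
proof -
  define F where "F = (\<Union>i<n. {e. rep (c i) e \<noteq> 0})"
  have fF: "finite F" unfolding F_def by (intro finite_UN_I rep_finite) simp
  have exp: "c i = (\<Sum>e\<in>F. sc (rep (c i) e) e)" if "i < n" for i
    by (rule rep_expand[symmetric]) (use fF that in \<open>auto simp: F_def\<close>)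
  have coef: "(\<Sum>i<n. \<beta> (sc (rep (c i) e) (a i)) (b i) e) = 0" for e
  proof (rule zero2[OF tri_bil[OF b]])
    show "(\<Sum>i<n. tens2 sc (sc (rep (c i) e) (a i)) (b i)) = 0"
    proof
      fix p :: "('a \<Rightarrow> 'k) \<times> ('a \<Rightarrow> 'k)"
      obtain f g where p: "p = (f, g)" by (cases p)
      show "(\<Sum>i<n. tens2 sc (sc (rep (c i) e) (a i)) (b i)) p = 0 p"
      proof (cases "lin_fun sc f \<and> lin_fun sc g")
        case True
        hence "(\<Sum>i<n. tens2 sc (sc (rep (c i) e) (a i)) (b i)) p
             = (\<Sum>i<n. tens3 sc (a i) (b i) (c i)) (f, g, \<lambda>x. rep x e)"
          by (simp add: p fsum_apply tens2_app tens3_app lin_rep lin_sc algebra_simps)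
        thus ?thesis using z by simp
      next
        case False thus ?thesis by (auto simp: p fsum_apply tens2_def)
      qed
    qed
  qed
  have t3: "\<beta> x y (\<Sum>e\<in>F. g e) = (\<Sum>e\<in>F. \<beta> x y (g e))" for x y g
    using bil_sum_r[OF tri_bil23[OF b]] .
  have bal: "\<beta> x y (sc r e) = \<beta> (sc r x) y e" for x y r e using b unfolding tri_def by metis
  have "(\<Sum>i<n. \<beta> (a i) (b i) (c i)) = (\<Sum>i<n. \<Sum>e\<in>F. \<beta> (sc (rep (c i) e) (a i)) (b i) e)"
  proof (rule sum.cong[OF refl])
    fix i assume "i \<in> {..<n}"
    hence "\<beta> (a i) (b i) (c i) = \<beta> (a i) (b i) (\<Sum>e\<in>F. sc (rep (c i) e) e)" using exp by simp
    also have "\<dots> = (\<Sum>e\<in>F. \<beta> (sc (rep (c i) e) (a i)) (b i) e)"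
      by (simp add: t3 bal)
    finally show "\<beta> (a i) (b i) (c i) = (\<Sum>e\<in>F. \<beta> (sc (rep (c i) e) (a i)) (b i) e)" .
  qed
  also have "\<dots> = (\<Sum>e\<in>F. \<Sum>i<n. \<beta> (sc (rep (c i) e) (a i)) (b i) e)" by (rule sum.swap)
  also have "\<dots> = 0" by (simp add: coef)
  finally show ?thesis .
qed

lemma key3:
  assumes b: "tri \<beta>"
    and eq: "(\<Sum>i<(n::nat). tens3 sc (a i) (b i) (c i)) = (\<Sum>i<(m::nat). tens3 sc (a' i) (b' i) (c' i))"
  shows "(\<Sum>i<n. \<beta> (a i) (b i) (c i)) = (\<Sum>i<m. \<beta> (a' i) (b' i) (c' i))"
proof -
  define a2 where "a2 i = (if i < n then a i else - a' (i - n))" for i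
  define b2 where "b2 i = (if i < n then b i else b' (i - n))" for i
  define c2 where "c2 i = (if i < n then c i else c' (i - n))" for i
  have neg: "\<beta> (- x) y z = - \<beta> x y z" for x y z
  proof -
    have z: "\<beta> 0 y z = 0" using bil_sum_l[OF tri_bil[OF b], of "\<lambda>i. 0" "{}"] by simp
    have "\<beta> (x + - x) y z = \<beta> x y z + \<beta> (- x) y z" using b unfolding tri_def by blast
    thus ?thesis using z by (simp add: eq_neg_iff_add_eq_0 add.commute)
  qed
  have "(\<Sum>i<n + m. tens3 sc (a2 i) (b2 i) (c2 i)) = (\<Sum>i<n. tens3 sc (a i) (b i) (c i)) - (\<Sum>i<m. tens3 sc (a' i) (b' i) (c' i))"
    unfolding sum_split a2_def b2_def c2_def by (simp add: tens3_minus_1 sum_negf)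
  hence "(\<Sum>i<n + m. \<beta> (a2 i) (b2 i) (c2 i)) = 0" using eq by (intro zero3[OF b]) simp
  hence "(\<Sum>i<n. \<beta> (a i) (b i) (c i)) - (\<Sum>i<m. \<beta> (a' i) (b' i) (c' i)) = 0"
    unfolding sum_split a2_def b2_def c2_def by (simp add: neg sum_negf)
  thus ?thesis by simp
qed

lemma lift3_sum:
  assumes b: "tri \<beta>"
  shows "lift3 sc \<beta> (\<Sum>i<(n::nat). tens3 sc (a i) (b i) (c i)) = (\<Sum>i<n. \<beta> (a i) (b i) (c i))"
  unfolding lift3_def
proof (rule someI2)
  show "\<exists>n' a' b' c'. (\<Sum>i<n. tens3 sc (a i) (b i) (c i)) = (\<Sum>i<(n'::nat). tens3 sc (a' i) (b' i) (c' i)) \<and>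
          (\<Sum>i<n. \<beta> (a i) (b i) (c i)) = (\<Sum>i<n'. \<beta> (a' i) (b' i) (c' i))"
    by (intro exI[of _ n] exI[of _ a] exI[of _ b] exI[of _ c] conjI refl)
next
  fix v assume "\<exists>n' a' b' c'. (\<Sum>i<n. tens3 sc (a i) (b i) (c i)) = (\<Sum>i<(n'::nat). tens3 sc (a' i) (b' i) (c' i)) \<and>
          v = (\<Sum>i<n'. \<beta> (a' i) (b' i) (c' i))"
  then obtain n' a' b' c' where e1: "(\<Sum>i<n. tens3 sc (a i) (b i) (c i)) = (\<Sum>i<(n'::nat). tens3 sc (a' i) (b' i) (c' i))"
     and e2: "v = (\<Sum>i<n'. \<beta> (a' i) (b' i) (c' i))" by blast
  show "v = (\<Sum>i<n. \<beta> (a i) (b i) (c i))" unfolding e2 using key3[OF b e1] by simp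
qed

lemma lift3_single: "tri \<beta> \<Longrightarrow> lift3 sc \<beta> (tens3 sc a b c) = \<beta> a b c"
proof -
  assume b: "tri \<beta>"
  have "tens3 sc a b c = (\<Sum>i<(1::nat). tens3 sc ((\<lambda>_. a) i) ((\<lambda>_. b) i) ((\<lambda>_. c) i))" by simp
  thus ?thesis using lift3_sum[OF b, where n=1 and a="\<lambda>_. a" and b="\<lambda>_. b" and c="\<lambda>_. c"] by simp
qed


abbreviation "T \<equiv> TT2 sc"
abbreviation "T3 \<equiv> TT3 sc"

lemma TT2E: assumes "s \<in> T" obtains n a b where "s = (\<Sum>i<(n::nat). tens2 sc (a i) (b i))"
  using assms unfolding TT2_def by blast
lemma TT2I: "(\<Sum>i<(n::nat). tens2 sc (a i) (b i)) \<in> T"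
  unfolding TT2_def by blast
lemma TT3E: assumes "s \<in> T3" obtains n a b c where "s = (\<Sum>i<(n::nat). tens3 sc (a i) (b i) (c i))"
  using assms unfolding TT3_def by blast
lemma TT3I: "(\<Sum>i<(n::nat). tens3 sc (a i) (b i) (c i)) \<in> T3"
  unfolding TT3_def by blast

lemma tens2_T: "tens2 sc a b \<in> T"
  using TT2I[where n=1 and a="\<lambda>_. a" and b="\<lambda>_. b"] by simp
lemma tens3_T: "tens3 sc a b c \<in> T3"
  using TT3I[where n=1 and a="\<lambda>_. a" and b="\<lambda>_. b" and c="\<lambda>_. c"] by simp
lemma zero_T: "0 \<in> T"
  using TT2I[where n=0] by simp
lemma zero_T3: "0 \<in> T3"
  using TT3I[where n=0] by simp

lemma add_T: assumes "s \<in> T" "t \<in> T" shows "s + t \<in> T"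
proof -
  obtain n a b where s: "s = (\<Sum>i<(n::nat). tens2 sc (a i) (b i))" using assms(1) by (rule TT2E)
  obtain m c d where t: "t = (\<Sum>i<(m::nat). tens2 sc (c i) (d i))" using assms(2) by (rule TT2E)
  define a2 where "a2 i = (if i < n then a i else c (i - n))" for i
  define b2 where "b2 i = (if i < n then b i else d (i - n))" for i
  have "s + t = (\<Sum>i<n + m. tens2 sc (a2 i) (b2 i))"
    unfolding sum_split a2_def b2_def s t by simp
  thus ?thesis using TT2I by simp
qed

lemma add_T3: assumes "s \<in> T3" "t \<in> T3" shows "s + t \<in> T3"
proof -
  obtain n a b c where s: "s = (\<Sum>i<(n::nat). tens3 sc (a i) (b i) (c i))" using assms(1) by (rule TT3E)
  obtain m a' b' c' where t: "t = (\<Sum>i<(m::nat). tens3 sc (a' i) (b' i) (c' i))" using assms(2) by (rule TT3E)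
  define a2 where "a2 i = (if i < n then a i else a' (i - n))" for i
  define b2 where "b2 i = (if i < n then b i else b' (i - n))" for i
  define c2 where "c2 i = (if i < n then c i else c' (i - n))" for i
  have "s + t = (\<Sum>i<n + m. tens3 sc (a2 i) (b2 i) (c2 i))"
    unfolding sum_split a2_def b2_def c2_def s t by simp
  thus ?thesis using TT3I by simp
qed

lemma sum_T: "(\<And>i. i \<in> I \<Longrightarrow> g i \<in> T) \<Longrightarrow> (\<Sum>i\<in>I. g i) \<in> T"
  by (induction I rule: infinite_finite_induct) (auto simp: zero_T add_T)
lemma sum_T3: "(\<And>i. i \<in> I \<Longrightarrow> g i \<in> T3) \<Longrightarrow> (\<Sum>i\<in>I. g i) \<in> T3"
  by (induction I rule: infinite_finite_induct) (auto simp: zero_T3 add_T3)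

lemma fsc_add: "fsc c (x + y) = fsc c x + fsc c y"
  unfolding fsc_def by (simp add: fun_eq_iff algebra_simps)
lemma fsc_zero[simp]: "fsc c 0 = 0" unfolding fsc_def by (simp add: fun_eq_iff)
lemma fsc_0[simp]: "fsc 0 x = 0" unfolding fsc_def by (simp add: fun_eq_iff)
lemma fsc_1[simp]: "fsc 1 x = x" unfolding fsc_def by (simp add: fun_eq_iff)
lemma fsc_sum: "fsc c (\<Sum>i\<in>I. g i) = (\<Sum>i\<in>I. fsc c (g i))"
proof (induction I rule: infinite_finite_induct)
  case (insert x F) then show ?case by (simp only: sum.insert[OF insert(1,2)] fsc_add)
next
  case (infinite A) then show ?case by (simp only: sum.infinite[OF infinite] fsc_zero)
qed (simp only: sum.empty fsc_zero)
lemma fsc_fsc: "fsc c (fsc d x) = fsc (c * d) x" unfolding fsc_def by (simp add: fun_eq_iff)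
lemma fsc_minus: "fsc c (- x) = - fsc c x" unfolding fsc_def by (simp add: fun_eq_iff)
lemma fsc_diff: "fsc c (x - y) = fsc c x - fsc c y" unfolding fsc_def by (simp add: fun_eq_iff algebra_simps)

lemma fsc_T: assumes "s \<in> T" shows "fsc c s \<in> T"
proof -
  obtain n a b where s: "s = (\<Sum>i<(n::nat). tens2 sc (a i) (b i))" using assms by (rule TT2E)
  have "fsc c s = (\<Sum>i<n. tens2 sc (sc c (a i)) (b i))" unfolding s fsc_sum by (simp add: tens2_sc_l)
  thus ?thesis using TT2I by simp
qed

lemma fsc_T3: assumes "s \<in> T3" shows "fsc k s \<in> T3"
proof -
  obtain n a b c where s: "s = (\<Sum>i<(n::nat). tens3 sc (a i) (b i) (c i))" using assms by (rule TT3E)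
  have "fsc k s = (\<Sum>i<n. tens3 sc (sc k (a i)) (b i) (c i))" unfolding s fsc_sum by (simp add: tens3_sc_1)
  thus ?thesis using TT3I by simp
qed

lemma minus_T: "s \<in> T \<Longrightarrow> - s \<in> T"
proof -
  assume "s \<in> T"
  moreover have "fsc (-1) s = - s" unfolding fsc_def by (simp add: fun_eq_iff)
  ultimately show ?thesis using fsc_T[of s "-1"] by simp
qed
lemma diff_T: "s \<in> T \<Longrightarrow> t \<in> T \<Longrightarrow> s - t \<in> T"
  using add_T minus_T by (metis diff_conv_add_uminus)


lemma lift2_zero: "bil \<beta> \<Longrightarrow> lift2 sc \<beta> 0 = 0"
  using lift2_sum[of \<beta>, where n=0] by simp

lemma lift2_add: assumes b: "bil \<beta>" and "s \<in> T" "t \<in> T"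
  shows "lift2 sc \<beta> (s + t) = lift2 sc \<beta> s + lift2 sc \<beta> t"
proof -
  obtain n a b where s: "s = (\<Sum>i<(n::nat). tens2 sc (a i) (b i))" using assms(2) by (rule TT2E)
  obtain m c d where t: "t = (\<Sum>i<(m::nat). tens2 sc (c i) (d i))" using assms(3) by (rule TT2E)
  define a2 where "a2 i = (if i < n then a i else c (i - n))" for i
  define b2 where "b2 i = (if i < n then b i else d (i - n))" for i
  have "s + t = (\<Sum>i<n + m. tens2 sc (a2 i) (b2 i))"
    unfolding sum_split a2_def b2_def s t by simp
  hence "lift2 sc \<beta> (s + t) = (\<Sum>i<n + m. \<beta> (a2 i) (b2 i))" by (simp add: lift2_sum[OF b])
  also have "\<dots> = lift2 sc \<beta> s + lift2 sc \<beta> t"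
    unfolding sum_split s t lift2_sum[OF b] a2_def b2_def by simp
  finally show ?thesis .
qed

lemma lift2_sumT: assumes b: "bil \<beta>" shows "(\<And>i. i \<in> I \<Longrightarrow> g i \<in> T) \<Longrightarrow>
    lift2 sc \<beta> (\<Sum>i\<in>I. g i) = (\<Sum>i\<in>I. lift2 sc \<beta> (g i))"
proof (induction I rule: infinite_finite_induct)
  case (insert x F)
  have "lift2 sc \<beta> (\<Sum>i\<in>insert x F. g i) = lift2 sc \<beta> (g x + (\<Sum>i\<in>F. g i))"
    by (simp only: sum.insert[OF insert(1,2)])
  also have "\<dots> = lift2 sc \<beta> (g x) + lift2 sc \<beta> (\<Sum>i\<in>F. g i)"
    by (rule lift2_add[OF b]) (use insert in \<open>auto intro: sum_T\<close>)
  finally show ?case using insert(3,4) by (simp only: sum.insert[OF insert(1,2)]) simp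
qed (simp_all add: lift2_zero[OF b])

lemma lift3_zero: "tri \<beta> \<Longrightarrow> lift3 sc \<beta> 0 = 0"
  using lift3_sum[of \<beta>, where n=0] by simp

lemma lift3_add: assumes b: "tri \<beta>" and "s \<in> T3" "t \<in> T3"
  shows "lift3 sc \<beta> (s + t) = lift3 sc \<beta> s + lift3 sc \<beta> t"
proof -
  obtain n a b c where s: "s = (\<Sum>i<(n::nat). tens3 sc (a i) (b i) (c i))" using assms(2) by (rule TT3E)
  obtain m a' b' c' where t: "t = (\<Sum>i<(m::nat). tens3 sc (a' i) (b' i) (c' i))" using assms(3) by (rule TT3E)
  define a2 where "a2 i = (if i < n then a i else a' (i - n))" for i
  define b2 where "b2 i = (if i < n then b i else b' (i - n))" for i
  define c2 where "c2 i = (if i < n then c i else c' (i - n))" for i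
  have "s + t = (\<Sum>i<n + m. tens3 sc (a2 i) (b2 i) (c2 i))"
    unfolding sum_split a2_def b2_def c2_def s t by simp
  hence "lift3 sc \<beta> (s + t) = (\<Sum>i<n + m. \<beta> (a2 i) (b2 i) (c2 i))" by (simp add: lift3_sum[OF b])
  also have "\<dots> = lift3 sc \<beta> s + lift3 sc \<beta> t"
    unfolding sum_split s t lift3_sum[OF b] a2_def b2_def c2_def by simp
  finally show ?thesis .
qed

lemma lift3_sumT: assumes b: "tri \<beta>" shows "(\<And>i. i \<in> I \<Longrightarrow> g i \<in> T3) \<Longrightarrow>
    lift3 sc \<beta> (\<Sum>i\<in>I. g i) = (\<Sum>i\<in>I. lift3 sc \<beta> (g i))"
proof (induction I rule: infinite_finite_induct)
  case (insert x F)
  have "lift3 sc \<beta> (\<Sum>i\<in>insert x F. g i) = lift3 sc \<beta> (g x + (\<Sum>i\<in>F. g i))"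
    by (simp only: sum.insert[OF insert(1,2)])
  also have "\<dots> = lift3 sc \<beta> (g x) + lift3 sc \<beta> (\<Sum>i\<in>F. g i)"
    by (rule lift3_add[OF b]) (use insert in \<open>auto intro: sum_T3\<close>)
  finally show ?case using insert(3,4) by (simp only: sum.insert[OF insert(1,2)]) simp
qed (simp_all add: lift3_zero[OF b])

lemma bil_mu: "bil (\<lambda>a b. a * b)"
  by (rule bilI) (simp_all add: algebra_simps sc_mult_l[symmetric] sc_mult_r[symmetric])

lemma bil_tens2_mult: "bil (\<lambda>c d. tens2 sc (a * c) (b * d))"
  by (rule bilI) (simp_all add: distrib_left tens2_add_l tens2_add_r sc_mult_r[symmetric] tens2_sc_l tens2_sc_r)

lemma mult2_sum: "mult2 sc (\<Sum>i<(n::nat). tens2 sc (a i) (b i)) (\<Sum>j<(m::nat). tens2 sc (c j) (d j))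
   = (\<Sum>i<n. \<Sum>j<m. tens2 sc (a i * c j) (b i * d j))"
proof -
  have e: "(\<lambda>x y. lift2 sc (\<lambda>c' d'. tens2 sc (x * c') (y * d')) (\<Sum>j<m. tens2 sc (c j) (d j)))
      = (\<lambda>x y. \<Sum>j<m. tens2 sc (x * c j) (y * d j))"
    by (simp add: lift2_sum[OF bil_tens2_mult])
  have b: "bil (\<lambda>x y. \<Sum>j<m. tens2 sc (x * c j) (y * d j))"
    by (rule bilI) (simp_all add: distrib_right tens2_add_l tens2_add_r sum.distrib
        sc_mult_l[symmetric] tens2_sc_l tens2_sc_r)
  show ?thesis unfolding mult2_def e lift2_sum[OF b] ..
qed

lemma mult2_T: "s \<in> T \<Longrightarrow> t \<in> T \<Longrightarrow> mult2 sc s t \<in> T"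
  by (erule TT2E, erule TT2E) (simp add: mult2_sum tens2_T sum_T)

lemma mult2_single: "mult2 sc (tens2 sc a b) (tens2 sc c d) = tens2 sc (a * c) (b * d)"
  using mult2_sum[where n=1 and m=1 and a="\<lambda>_. a" and b="\<lambda>_. b" and c="\<lambda>_. c" and d="\<lambda>_. d"] by simp


lemma mult2_sum_r: "mult2 sc (\<Sum>i<(n::nat). tens2 sc (a i) (b i)) (tens2 sc c d)
   = (\<Sum>i<n. tens2 sc (a i * c) (b i * d))"
  using mult2_sum[where m=1 and c="\<lambda>_. c" and d="\<lambda>_. d"] by simp
lemma mult2_sum_l: "mult2 sc (tens2 sc c d) (\<Sum>i<(n::nat). tens2 sc (a i) (b i))
   = (\<Sum>i<n. tens2 sc (c * a i) (d * b i))"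
  using mult2_sum[where n=1 and a="\<lambda>_. c" and b="\<lambda>_. d" and m=n and c=a and d=b] by simp

lemma bil_slice: "lin_fun sc f \<Longrightarrow> bil (\<lambda>p q. sc (f p) q)"
  by (rule bilI) (simp_all add: lin_add lin_sc sc_add_l sc_add_r sc_sc mult.commute)
lemma bil_slice2: "lin_fun sc f \<Longrightarrow> bil (\<lambda>p q. sc (f q) p)"
  by (rule bilI) (simp_all add: lin_add lin_sc sc_add_l sc_add_r sc_sc mult.commute)

lemma sum_sc_mult_r: "(\<Sum>i\<in>I. sc (c i) (x i)) * r = (\<Sum>i\<in>I. sc (c i) (x i * r))"
  by (simp add: sum_distrib_right sc_mult_l)


end

locale nd = kalg sc for sc :: "'k::field \<Rightarrow> 'a::ring \<Rightarrow> 'a" +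
  assumes ndl: "\<And>b::'a. (\<forall>a. a * b = 0) \<Longrightarrow> b = 0"
      and ndr: "\<And>b::'a. (\<forall>a. b * a = 0) \<Longrightarrow> b = 0"
begin

lemma nondeg:
  assumes sT: "s \<in> T" and z: "\<And>u r. mult2 sc s (tens2 sc u r) = 0"
  shows "s = 0"
proof -
  obtain n d d' where s: "s = (\<Sum>i<(n::nat). tens2 sc (d i) (d' i))" using sT by (rule TT2E)
  show ?thesis
  proof
    fix p :: "('a \<Rightarrow> 'k) \<times> ('a \<Rightarrow> 'k)"
    obtain f g where p: "p = (f, g)" by (cases p)
    show "s p = 0 p"
    proof (cases "lin_fun sc f \<and> lin_fun sc g")
      case False thus ?thesis by (auto simp: p s fsum_apply tens2_def)
    next
      case True
      hence f: "lin_fun sc f" and g: "lin_fun sc g" by auto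
      have A: "(\<Sum>i<n. sc (g (d' i)) (d i)) = 0"
      proof (rule ndr, intro allI)
        fix u
        show "(\<Sum>i<n. sc (g (d' i)) (d i)) * u = 0"
        proof (rule separate)
          fix h assume h: "lin_fun sc h"
          have B: "(\<Sum>i<n. sc (h (d i * u)) (d' i)) = 0"
          proof (rule ndr, intro allI)
            fix r
            have "0 = lift2 sc (\<lambda>p q. sc (h p) q) (mult2 sc s (tens2 sc u r))"
              using z lift2_zero[OF bil_slice[OF h]] by simp
            also have "\<dots> = (\<Sum>i<n. sc (h (d i * u)) (d' i * r))"
              unfolding s mult2_sum_r lift2_sum[OF bil_slice[OF h]] ..
            finally show "(\<Sum>i<n. sc (h (d i * u)) (d' i)) * r = 0"
              by (simp add: sum_sc_mult_r)
          qed
          have "h ((\<Sum>i<n. sc (g (d' i)) (d i)) * u) = (\<Sum>i<n. h (d i * u) * g (d' i))"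
            by (simp add: sum_sc_mult_r lin_sum[OF h] lin_sc[OF h] sc_mult_l[symmetric] mult.commute)
          also have "\<dots> = g (\<Sum>i<n. sc (h (d i * u)) (d' i))"
            by (simp add: lin_sum[OF g] lin_sc[OF g])
          also have "\<dots> = 0" using B lin_zero[OF g] by simp
          finally show "h ((\<Sum>i<n. sc (g (d' i)) (d i)) * u) = 0" .
        qed
      qed
      have "s p = (\<Sum>i<n. f (d i) * g (d' i))" by (simp add: p s fsum_apply tens2_app f g)
      also have "\<dots> = f (\<Sum>i<n. sc (g (d' i)) (d i))"
        by (simp add: lin_sum[OF f] lin_sc[OF f] mult.commute)
      also have "\<dots> = 0" using A lin_zero[OF f] by simp
      finally show ?thesis by simp
    qed
  qed
qed


end


context kalg
begin

definition tlin :: "(('k,'a) t2 \<Rightarrow> ('k,'a) t2) \<Rightarrow> bool" where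
  "tlin F \<longleftrightarrow> (\<forall>s\<in>T. F s \<in> T) \<and> (\<forall>s\<in>T. \<forall>t\<in>T. F (s + t) = F s + F t) \<and>
     (\<forall>c. \<forall>s\<in>T. F (fsc c s) = fsc c (F s))"

lemma tlin_T: "tlin F \<Longrightarrow> s \<in> T \<Longrightarrow> F s \<in> T" unfolding tlin_def by blast
lemma tlin_add: "tlin F \<Longrightarrow> s \<in> T \<Longrightarrow> t \<in> T \<Longrightarrow> F (s + t) = F s + F t" unfolding tlin_def by blast
lemma tlin_fsc: "tlin F \<Longrightarrow> s \<in> T \<Longrightarrow> F (fsc c s) = fsc c (F s)" unfolding tlin_def by blast
lemma tlin_zero: "tlin F \<Longrightarrow> F 0 = 0"
  using tlin_fsc[of F 0 0] zero_T by simp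
lemma tlin_sum: "tlin F \<Longrightarrow> (\<And>i. i \<in> I \<Longrightarrow> g i \<in> T) \<Longrightarrow> F (\<Sum>i\<in>I. g i) = (\<Sum>i\<in>I. F (g i))"
proof (induction I rule: infinite_finite_induct)
  case (insert x F')
  have "F (\<Sum>i\<in>insert x F'. g i) = F (g x + (\<Sum>i\<in>F'. g i))"
    by (simp only: sum.insert[OF insert(1,2)])
  also have "\<dots> = F (g x) + F (\<Sum>i\<in>F'. g i)"
    by (rule tlin_add[OF insert(4)]) (use insert in \<open>auto intro: sum_T\<close>)
  finally show ?case using insert(3,4,5) by (simp only: sum.insert[OF insert(1,2)]) simp
next
  case (infinite A) thus ?case using tlin_zero by (metis sum.infinite)
qed (metis sum.empty tlin_zero)
lemma tlin_minus: "tlin F \<Longrightarrow> s \<in> T \<Longrightarrow> F (- s) = - F s"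
proof -
  assume a: "tlin F" "s \<in> T"
  have m: "fsc (-1) x = - x" for x :: "('k,'a) t2" unfolding fsc_def by (simp add: fun_eq_iff)
  show ?thesis using tlin_fsc[OF a, of "-1"] by (simp add: m)
qed
lemma tlin_diff: "tlin F \<Longrightarrow> s \<in> T \<Longrightarrow> t \<in> T \<Longrightarrow> F (s - t) = F s - F t"
proof -
  assume a: "tlin F" "s \<in> T" "t \<in> T"
  have "F (s + - t) = F s + F (- t)" using a by (intro tlin_add minus_T)
  thus ?thesis using tlin_minus[OF a(1,3)] by (simp only: diff_conv_add_uminus)
qed

lemma is_mlt_tlin: assumes "is_mlt T fsc (mult2 sc) m" shows "tlin (fst m)" "tlin (snd m)"
  using assms unfolding is_mlt_def tlin_def by auto

lemma lift2_tlin: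
  assumes b: "bil \<beta>" and inT: "\<And>x y. \<beta> x y \<in> T" and s: "\<And>c x y. \<beta> (sc c x) y = fsc c (\<beta> x y)"
  shows "tlin (lift2 sc \<beta>)"
  unfolding tlin_def
proof (intro conjI ballI allI)
  fix x assume "x \<in> T"
  then obtain n a b where x: "x = (\<Sum>i<(n::nat). tens2 sc (a i) (b i))" by (rule TT2E)
  show "lift2 sc \<beta> x \<in> T" unfolding x lift2_sum[OF b] by (rule sum_T) (rule inT)
  fix c
  have fx: "fsc c x = (\<Sum>i<n. tens2 sc (sc c (a i)) (b i))" unfolding x fsc_sum by (simp add: tens2_sc_l)
  show "lift2 sc \<beta> (fsc c x) = fsc c (lift2 sc \<beta> x)"
    unfolding fx lift2_sum[OF b] s unfolding x lift2_sum[OF b] fsc_sum ..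
next
  fix x y assume "x \<in> T" "y \<in> T" thus "lift2 sc \<beta> (x + y) = lift2 sc \<beta> x + lift2 sc \<beta> y"
    by (rule lift2_add[OF b])
qed

lemma bil_tens_one_f: "bil (\<lambda>x y. tens2 sc (a * x) y)"
  by (rule bilI) (simp_all add: distrib_left tens2_add_l tens2_add_r sc_mult_r[symmetric] tens2_sc_l tens2_sc_r)
lemma bil_tens_one_s: "bil (\<lambda>x y. tens2 sc (x * a) y)"
  by (rule bilI) (simp_all add: distrib_right tens2_add_l tens2_add_r sc_mult_l[symmetric] tens2_sc_l tens2_sc_r)
lemma bil_one_tens_f: "bil (\<lambda>x y. tens2 sc x (b * y))"
  by (rule bilI) (simp_all add: distrib_left tens2_add_l tens2_add_r sc_mult_r[symmetric] tens2_sc_l tens2_sc_r)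
lemma bil_one_tens_s: "bil (\<lambda>x y. tens2 sc x (y * b))"
  by (rule bilI) (simp_all add: distrib_right tens2_add_l tens2_add_r sc_mult_l[symmetric] tens2_sc_l tens2_sc_r)

lemma tlin_tens_one: "tlin (fst (tens_one sc a))" "tlin (snd (tens_one sc a))"
  unfolding tens_one_def fst_conv snd_conv
  by (rule lift2_tlin; simp add: bil_tens_one_f bil_tens_one_s tens2_T sc_mult_r[symmetric] sc_mult_l[symmetric] tens2_sc_l)+
lemma tlin_one_tens: "tlin (fst (one_tens sc a))" "tlin (snd (one_tens sc a))"
  unfolding one_tens_def fst_conv snd_conv
  by (rule lift2_tlin; simp add: bil_one_tens_f bil_one_tens_s tens2_T tens2_sc_l)+

lemma tens_one_sum: "fst (tens_one sc x) (\<Sum>i<(n::nat). tens2 sc (a i) (b i)) = (\<Sum>i<n. tens2 sc (x * a i) (b i))"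
  "snd (tens_one sc x) (\<Sum>i<(n::nat). tens2 sc (a i) (b i)) = (\<Sum>i<n. tens2 sc (a i * x) (b i))"
  unfolding tens_one_def fst_conv snd_conv by (simp_all add: lift2_sum bil_tens_one_f bil_tens_one_s)
lemma one_tens_sum: "fst (one_tens sc x) (\<Sum>i<(n::nat). tens2 sc (a i) (b i)) = (\<Sum>i<n. tens2 sc (a i) (x * b i))"
  "snd (one_tens sc x) (\<Sum>i<(n::nat). tens2 sc (a i) (b i)) = (\<Sum>i<n. tens2 sc (a i) (b i * x))"
  unfolding one_tens_def fst_conv snd_conv by (simp_all add: lift2_sum bil_one_tens_f bil_one_tens_s)
lemma tens_one_single: "fst (tens_one sc x) (tens2 sc a b) = tens2 sc (x * a) b"
  "snd (tens_one sc x) (tens2 sc a b) = tens2 sc (a * x) b"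
  unfolding tens_one_def fst_conv snd_conv by (simp_all add: lift2_single bil_tens_one_f bil_tens_one_s)
lemma one_tens_single: "fst (one_tens sc x) (tens2 sc a b) = tens2 sc a (x * b)"
  "snd (one_tens sc x) (tens2 sc a b) = tens2 sc a (b * x)"
  unfolding one_tens_def fst_conv snd_conv by (simp_all add: lift2_single bil_one_tens_f bil_one_tens_s)

lemma tens_one_add: assumes "s \<in> T"
  shows "fst (tens_one sc (x + y)) s = fst (tens_one sc x) s + fst (tens_one sc y) s"
  by (rule TT2E[OF assms]) (simp add: tens_one_sum distrib_left distrib_right tens2_add_l sum.distrib)
lemma tens_one_add2: assumes "s \<in> T"
  shows "snd (tens_one sc (x + y)) s = snd (tens_one sc x) s + snd (tens_one sc y) s"
  by (rule TT2E[OF assms]) (simp add: tens_one_sum distrib_left distrib_right tens2_add_l sum.distrib)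
lemma tens_one_sc: assumes "s \<in> T"
  shows "fst (tens_one sc (sc c x)) s = fsc c (fst (tens_one sc x) s)"
  by (rule TT2E[OF assms]) (simp add: tens_one_sum sc_mult_l[symmetric] sc_mult_r[symmetric] tens2_sc_l fsc_sum)
lemma tens_one_sc2: assumes "s \<in> T"
  shows "snd (tens_one sc (sc c x)) s = fsc c (snd (tens_one sc x) s)"
  by (rule TT2E[OF assms]) (simp add: tens_one_sum sc_mult_l[symmetric] sc_mult_r[symmetric] tens2_sc_l fsc_sum)
lemma one_tens_add: assumes "s \<in> T"
  shows "fst (one_tens sc (x + y)) s = fst (one_tens sc x) s + fst (one_tens sc y) s"
  by (rule TT2E[OF assms]) (simp add: one_tens_sum distrib_left distrib_right tens2_add_r sum.distrib)
lemma one_tens_add2: assumes "s \<in> T"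
  shows "snd (one_tens sc (x + y)) s = snd (one_tens sc x) s + snd (one_tens sc y) s"
  by (rule TT2E[OF assms]) (simp add: one_tens_sum distrib_left distrib_right tens2_add_r sum.distrib)
lemma one_tens_sc: assumes "s \<in> T"
  shows "fst (one_tens sc (sc c x)) s = fsc c (fst (one_tens sc x) s)"
  by (rule TT2E[OF assms]) (simp add: one_tens_sum sc_mult_l[symmetric] sc_mult_r[symmetric] tens2_sc_r fsc_sum)
lemma one_tens_sc2: assumes "s \<in> T"
  shows "snd (one_tens sc (sc c x)) s = fsc c (snd (one_tens sc x) s)"
  by (rule TT2E[OF assms]) (simp add: one_tens_sum sc_mult_l[symmetric] sc_mult_r[symmetric] tens2_sc_r fsc_sum)

lemma mult2_tlin_l: "w \<in> T \<Longrightarrow> tlin (\<lambda>s. mult2 sc s w)"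
proof -
  assume "w \<in> T"
  then obtain m c d where w: "w = (\<Sum>j<(m::nat). tens2 sc (c j) (d j))" by (rule TT2E)
  have b: "bil (\<lambda>x y. \<Sum>j<m. tens2 sc (x * c j) (y * d j))"
    by (rule bilI) (simp_all add: distrib_right tens2_add_l tens2_add_r sum.distrib
        sc_mult_l[symmetric] tens2_sc_l tens2_sc_r)
  have e: "(\<lambda>s. mult2 sc s w) = lift2 sc (\<lambda>x y. \<Sum>j<m. tens2 sc (x * c j) (y * d j))"
  proof
    fix s
    show "mult2 sc s w = lift2 sc (\<lambda>x y. \<Sum>j<m. tens2 sc (x * c j) (y * d j)) s"
      unfolding mult2_def w by (simp add: lift2_sum[OF bil_tens2_mult])
  qed
  show ?thesis unfolding e
    by (rule lift2_tlin[OF b]) (simp_all add: sum_T tens2_T fsc_sum sc_mult_l[symmetric] tens2_sc_l)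
qed

lemma mult2_tlin_r: "w \<in> T \<Longrightarrow> tlin (\<lambda>s. mult2 sc w s)"
proof -
  assume "w \<in> T"
  then obtain m c d where w: "w = (\<Sum>j<(m::nat). tens2 sc (c j) (d j))" by (rule TT2E)
  have b: "bil (\<lambda>x y. \<Sum>j<m. tens2 sc (c j * x) (d j * y))"
    by (rule bilI) (simp_all add: distrib_left tens2_add_l tens2_add_r sum.distrib
        sc_mult_r[symmetric] tens2_sc_l tens2_sc_r)
  have e: "mult2 sc w s = lift2 sc (\<lambda>x y. \<Sum>j<m. tens2 sc (c j * x) (d j * y)) s" if "s \<in> T" for s
  proof -
    obtain n x y where s: "s = (\<Sum>i<(n::nat). tens2 sc (x i) (y i))" using \<open>s \<in> T\<close> by (rule TT2E)
    show ?thesis unfolding s w mult2_sum lift2_sum[OF b] by (rule sum.swap)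
  qed
  have "tlin (lift2 sc (\<lambda>x y. \<Sum>j<m. tens2 sc (c j * x) (d j * y)))"
    by (rule lift2_tlin[OF b]) (simp_all add: sum_T tens2_T fsc_sum sc_mult_r[symmetric] tens2_sc_l)
  thus ?thesis using e unfolding tlin_def by (simp add: add_T fsc_T)
qed


end


context kalg
begin

lemma bil_rtens: "bil (\<lambda>x y. tens3 sc x y z)"
  by (rule bilI) (simp_all add: tens3_add_1 tens3_add_2 tens3_sc_1 tens3_sc_2)
lemma bil_ltens: "bil (\<lambda>y z. tens3 sc x y z)"
  by (rule bilI) (simp_all add: tens3_add_2 tens3_add_3 tens3_sc_2 tens3_sc_3)

lemma rtens_sum: "rtens sc (\<Sum>i<(n::nat). tens2 sc (a i) (b i)) z = (\<Sum>i<n. tens3 sc (a i) (b i) z)"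
  unfolding rtens_def by (simp add: lift2_sum bil_rtens)
lemma ltens_sum: "ltens sc x (\<Sum>i<(n::nat). tens2 sc (a i) (b i)) = (\<Sum>i<n. tens3 sc x (a i) (b i))"
  unfolding ltens_def by (simp add: lift2_sum bil_ltens)
lemma rtens_single: "rtens sc (tens2 sc a b) z = tens3 sc a b z"
  unfolding rtens_def by (simp add: lift2_single bil_rtens)
lemma ltens_single: "ltens sc x (tens2 sc a b) = tens3 sc x a b"
  unfolding ltens_def by (simp add: lift2_single bil_ltens)

lemma rtens_T3: "s \<in> T \<Longrightarrow> rtens sc s z \<in> T3"
  by (erule TT2E) (simp add: rtens_sum sum_T3 tens3_T)
lemma ltens_T3: "s \<in> T \<Longrightarrow> ltens sc x s \<in> T3"
  by (erule TT2E) (simp add: ltens_sum sum_T3 tens3_T)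
lemma rtens_add_l: "s \<in> T \<Longrightarrow> t \<in> T \<Longrightarrow> rtens sc (s + t) z = rtens sc s z + rtens sc t z"
  unfolding rtens_def by (rule lift2_add[OF bil_rtens])
lemma ltens_add_r: "s \<in> T \<Longrightarrow> t \<in> T \<Longrightarrow> ltens sc x (s + t) = ltens sc x s + ltens sc x t"
  unfolding ltens_def by (rule lift2_add[OF bil_ltens])
lemma rtens_add_r: "s \<in> T \<Longrightarrow> rtens sc s (z + z') = rtens sc s z + rtens sc s z'"
  by (erule TT2E) (simp add: rtens_sum tens3_add_3 sum.distrib)
lemma ltens_add_l: "s \<in> T \<Longrightarrow> ltens sc (x + x') s = ltens sc x s + ltens sc x' s"
  by (erule TT2E) (simp add: ltens_sum tens3_add_1 sum.distrib)
lemma rtens_fsc: "s \<in> T \<Longrightarrow> rtens sc (fsc c s) z = rtens sc s (sc c z)"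
  by (erule TT2E) (simp add: rtens_sum fsc_sum tens2_sc_l[symmetric] tens3_sc_1 tens3_sc_3)
lemma ltens_fsc: "s \<in> T \<Longrightarrow> ltens sc x (fsc c s) = ltens sc (sc c x) s"
  by (erule TT2E) (simp add: ltens_sum fsc_sum tens2_sc_l[symmetric] tens3_sc_1 tens3_sc_2)

lemma tri_Etens: assumes F: "tlin F" shows "tri (\<lambda>x y z. rtens sc (F (tens2 sc x y)) z)"
proof (rule triI)
  fix a a' b d show "rtens sc (F (tens2 sc (a + a') b)) d = rtens sc (F (tens2 sc a b)) d + rtens sc (F (tens2 sc a' b)) d"
    by (simp add: tens2_add_l tlin_add[OF F] tens2_T rtens_add_l tlin_T[OF F])
next
  fix a b b' d show "rtens sc (F (tens2 sc a (b + b'))) d = rtens sc (F (tens2 sc a b)) d + rtens sc (F (tens2 sc a b')) d"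
    by (simp add: tens2_add_r tlin_add[OF F] tens2_T rtens_add_l tlin_T[OF F])
next
  fix a b d d' show "rtens sc (F (tens2 sc a b)) (d + d') = rtens sc (F (tens2 sc a b)) d + rtens sc (F (tens2 sc a b)) d'"
    by (simp add: rtens_add_r tlin_T[OF F] tens2_T)
next
  fix c a b d show "rtens sc (F (tens2 sc (sc c a) b)) d = rtens sc (F (tens2 sc a (sc c b))) d"
    by (simp add: tens2_sc_l tens2_sc_r)
next
  fix c a b d show "rtens sc (F (tens2 sc a (sc c b))) d = rtens sc (F (tens2 sc a b)) (sc c d)"
    by (simp add: tens2_sc_r tlin_fsc[OF F] tens2_T rtens_fsc tlin_T[OF F])
qed

lemma tri_tensE: assumes F: "tlin F" shows "tri (\<lambda>x y z. ltens sc x (F (tens2 sc y z)))"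
proof (rule triI)
  fix a a' b d show "ltens sc (a + a') (F (tens2 sc b d)) = ltens sc a (F (tens2 sc b d)) + ltens sc a' (F (tens2 sc b d))"
    by (simp add: ltens_add_l tlin_T[OF F] tens2_T)
next
  fix a b b' d show "ltens sc a (F (tens2 sc (b + b') d)) = ltens sc a (F (tens2 sc b d)) + ltens sc a (F (tens2 sc b' d))"
    by (simp add: tens2_add_l tlin_add[OF F] tens2_T ltens_add_r tlin_T[OF F])
next
  fix a b d d' show "ltens sc a (F (tens2 sc b (d + d'))) = ltens sc a (F (tens2 sc b d)) + ltens sc a (F (tens2 sc b d'))"
    by (simp add: tens2_add_r tlin_add[OF F] tens2_T ltens_add_r tlin_T[OF F])
next
  fix c a b d show "ltens sc (sc c a) (F (tens2 sc b d)) = ltens sc a (F (tens2 sc (sc c b) d))"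
    by (simp add: tens2_sc_l tlin_fsc[OF F] tens2_T ltens_fsc tlin_T[OF F])
next
  fix c a b d show "ltens sc a (F (tens2 sc (sc c b) d)) = ltens sc a (F (tens2 sc b (sc c d)))"
    by (simp add: tens2_sc_l tens2_sc_r)
qed

lemma E_tens_one_sum: assumes "tlin (fst E)"
  shows "fst (E_tens_one sc E) (\<Sum>i<(n::nat). tens3 sc (u i) (v i) (r i)) = (\<Sum>i<n. rtens sc (fst E (tens2 sc (u i) (v i))) (r i))"
  unfolding E_tens_one_def fst_conv by (rule lift3_sum[OF tri_Etens[OF assms]])
lemma one_tens_E_sum: assumes "tlin (fst E)"
  shows "fst (one_tens_E sc E) (\<Sum>i<(n::nat). tens3 sc (u i) (v i) (r i)) = (\<Sum>i<n. ltens sc (u i) (fst E (tens2 sc (v i) (r i))))"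
  unfolding one_tens_E_def fst_conv by (rule lift3_sum[OF tri_tensE[OF assms]])

lemma bil_mu': "bil (\<lambda>a b. a * b)" by (rule bil_mu)
lemma mu_sum: "mu sc (\<Sum>i<(n::nat). tens2 sc (a i) (b i)) = (\<Sum>i<n. a i * b i)"
  unfolding mu_def by (simp add: lift2_sum bil_mu)
lemma mu_single: "mu sc (tens2 sc a b) = a * b"
  unfolding mu_def by (simp add: lift2_single bil_mu)

context fixes \<epsilon> :: "'a \<Rightarrow> 'k" assumes eps: "lin_fun sc \<epsilon>"
begin

lemma eps_id_sum: "eps_id sc \<epsilon> (\<Sum>i<(n::nat). tens2 sc (a i) (b i)) = (\<Sum>i<n. sc (\<epsilon> (a i)) (b i))"
  unfolding eps_id_def by (simp add: lift2_sum bil_slice[OF eps])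
lemma id_eps_sum: "id_eps sc \<epsilon> (\<Sum>i<(n::nat). tens2 sc (a i) (b i)) = (\<Sum>i<n. sc (\<epsilon> (b i)) (a i))"
  unfolding id_eps_def by (simp add: lift2_sum bil_slice2[OF eps])
lemma eps_id_single: "eps_id sc \<epsilon> (tens2 sc a b) = sc (\<epsilon> a) b"
  unfolding eps_id_def by (simp add: lift2_single bil_slice[OF eps])
lemma id_eps_single: "id_eps sc \<epsilon> (tens2 sc a b) = sc (\<epsilon> b) a"
  unfolding id_eps_def by (simp add: lift2_single bil_slice2[OF eps])
lemma eps_id_add: "s \<in> T \<Longrightarrow> t \<in> T \<Longrightarrow> eps_id sc \<epsilon> (s + t) = eps_id sc \<epsilon> s + eps_id sc \<epsilon> t"
  unfolding eps_id_def by (rule lift2_add[OF bil_slice[OF eps]])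
lemma id_eps_add: "s \<in> T \<Longrightarrow> t \<in> T \<Longrightarrow> id_eps sc \<epsilon> (s + t) = id_eps sc \<epsilon> s + id_eps sc \<epsilon> t"
  unfolding id_eps_def by (rule lift2_add[OF bil_slice2[OF eps]])
lemma eps_id_sumT: "(\<And>i. i \<in> I \<Longrightarrow> g i \<in> T) \<Longrightarrow> eps_id sc \<epsilon> (\<Sum>i\<in>I. g i) = (\<Sum>i\<in>I. eps_id sc \<epsilon> (g i))"
  unfolding eps_id_def by (rule lift2_sumT[OF bil_slice[OF eps]])
lemma id_eps_sumT: "(\<And>i. i \<in> I \<Longrightarrow> g i \<in> T) \<Longrightarrow> id_eps sc \<epsilon> (\<Sum>i\<in>I. g i) = (\<Sum>i\<in>I. id_eps sc \<epsilon> (g i))"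
  unfolding id_eps_def by (rule lift2_sumT[OF bil_slice2[OF eps]])
lemma eps_id_fsc: "s \<in> T \<Longrightarrow> eps_id sc \<epsilon> (fsc c s) = sc c (eps_id sc \<epsilon> s)"
  by (erule TT2E) (simp add: eps_id_sum fsc_sum tens2_sc_r[symmetric] sc_sum_r sc_sc mult.commute)

definition Phi where "Phi = lift3 sc (\<lambda>p q r. tens2 sc (sc (\<epsilon> q) p) r)"

lemma tri_Phi: "tri (\<lambda>p q r. tens2 sc (sc (\<epsilon> q) p) r)"
  by (rule triI) (simp_all add: tens2_add_l tens2_add_r lin_add[OF eps] lin_sc[OF eps] sc_add_l sc_add_r
      sc_sc tens2_sc_l tens2_sc_r mult.commute fsc_fsc)

lemma Phi_sum: "Phi (\<Sum>i<(n::nat). tens3 sc (a i) (b i) (c i)) = (\<Sum>i<n. tens2 sc (sc (\<epsilon> (b i)) (a i)) (c i))"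
  unfolding Phi_def by (rule lift3_sum[OF tri_Phi])
lemma Phi_add: "s \<in> T3 \<Longrightarrow> t \<in> T3 \<Longrightarrow> Phi (s + t) = Phi s + Phi t"
  unfolding Phi_def by (rule lift3_add[OF tri_Phi])
lemma Phi_sumT: "(\<And>i. i \<in> I \<Longrightarrow> g i \<in> T3) \<Longrightarrow> Phi (\<Sum>i\<in>I. g i) = (\<Sum>i\<in>I. Phi (g i))"
  unfolding Phi_def by (rule lift3_sumT[OF tri_Phi])

lemma Phi_rtens: "s \<in> T \<Longrightarrow> Phi (rtens sc s z) = tens2 sc (id_eps sc \<epsilon> s) z"
  by (erule TT2E) (simp add: rtens_sum Phi_sum id_eps_sum bil_sum_l[OF bil_rtens] tens2_add_l
      bil_sum_l[OF bilI[OF tens2_add_l tens2_add_r]] tens2_sc_l tens2_sc_r)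
lemma Phi_ltens: "s \<in> T \<Longrightarrow> Phi (ltens sc a s) = tens2 sc a (eps_id sc \<epsilon> s)"
  by (erule TT2E) (simp add: ltens_sum Phi_sum eps_id_sum
      bil_sum_r[OF bilI[OF tens2_add_l tens2_add_r]] tens2_sc_l tens2_sc_r)

end

end


locale wmb =
  fixes sc :: "'k::field \<Rightarrow> 'a::ring \<Rightarrow> 'a"
    and E :: "('k,'a) t2 mlt"
    and \<Delta> :: "'a \<Rightarrow> ('k,'a) t2 mlt"
    and \<epsilon> :: "'a \<Rightarrow> 'k"
  assumes W: "weak_multiplier_bialgebra sc E \<Delta> \<epsilon>"

sublocale wmb \<subseteq> nd sc
proof
  show "k_algebra sc" using W[unfolded weak_multiplier_bialgebra_def, THEN conjunct1] .
  show "(\<forall>a. a * b = 0) \<Longrightarrow> b = 0" for b :: 'a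
    using W[unfolded weak_multiplier_bialgebra_def, THEN conjunct2, THEN conjunct2, THEN conjunct1] by blast
  show "(\<forall>a. b * a = 0) \<Longrightarrow> b = 0" for b :: 'a
    using W[unfolded weak_multiplier_bialgebra_def, THEN conjunct2, THEN conjunct2, THEN conjunct2, THEN conjunct1] by blast
qed

context wmb
begin

lemmas Wc = W[unfolded weak_multiplier_bialgebra_def]

lemma idem: "\<exists>(n::nat) a b. (c::'a) = (\<Sum>i<n. a i * b i)"
  using Wc[THEN conjunct2, THEN conjunct1] by blast
lemma E_mlt: "is_mlt T fsc (mult2 sc) E"
  using Wc[THEN conjunct2, THEN conjunct2, THEN conjunct2, THEN conjunct2, THEN conjunct1] by blast
lemma E_idem: "meq T (mprod E E) E"
  using Wc[THEN conjunct2, THEN conjunct2, THEN conjunct2, THEN conjunct2, THEN conjunct2, THEN conjunct1] by blast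
lemma D_mlt: "is_mlt T fsc (mult2 sc) (\<Delta> a)"
  using Wc[THEN conjunct2, THEN conjunct2, THEN conjunct2, THEN conjunct2, THEN conjunct2, THEN conjunct2, THEN conjunct1] by blast
lemma D_add: "meq T (\<Delta> (a + b)) (madd (\<Delta> a) (\<Delta> b))"
  using Wc[THEN conjunct2, THEN conjunct2, THEN conjunct2, THEN conjunct2, THEN conjunct2, THEN conjunct2, THEN conjunct2, THEN conjunct2, THEN conjunct1] by blast
lemma D_sc: "meq T (\<Delta> (sc c a)) (msc fsc c (\<Delta> a))"
  using Wc[THEN conjunct2, THEN conjunct2, THEN conjunct2, THEN conjunct2, THEN conjunct2, THEN conjunct2, THEN conjunct2, THEN conjunct2, THEN conjunct2, THEN conjunct1] by blast
lemma eps: "lin_fun sc \<epsilon>"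
  using Wc[THEN conjunct2, THEN conjunct2, THEN conjunct2, THEN conjunct2, THEN conjunct2, THEN conjunct2, THEN conjunct2, THEN conjunct2, THEN conjunct2, THEN conjunct2, THEN conjunct1] by blast
lemma exT1: "\<exists>s\<in>T. meq T (mprod (\<Delta> a) (one_tens sc b)) (membed (mult2 sc) s)"
  using Wc[THEN conjunct2, THEN conjunct2, THEN conjunct2, THEN conjunct2, THEN conjunct2, THEN conjunct2, THEN conjunct2, THEN conjunct2, THEN conjunct2, THEN conjunct2, THEN conjunct2, THEN conjunct1] by blast
lemma exT2: "\<exists>s\<in>T. meq T (mprod (tens_one sc a) (\<Delta> b)) (membed (mult2 sc) s)"
  using Wc[THEN conjunct2, THEN conjunct2, THEN conjunct2, THEN conjunct2, THEN conjunct2, THEN conjunct2, THEN conjunct2, THEN conjunct2, THEN conjunct2, THEN conjunct2, THEN conjunct2, THEN conjunct2, THEN conjunct1] by blast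
lemma iii: "t \<in> T \<Longrightarrow> eps_id sc \<epsilon> (T1 sc \<Delta> t) = mu sc t \<and> id_eps sc \<epsilon> (T2 sc \<Delta> t) = mu sc t"
  using Wc[THEN conjunct2, THEN conjunct2, THEN conjunct2, THEN conjunct2, THEN conjunct2, THEN conjunct2, THEN conjunct2, THEN conjunct2, THEN conjunct2, THEN conjunct2, THEN conjunct2, THEN conjunct2, THEN conjunct2, THEN conjunct2, THEN conjunct1] by blast
lemma iv: "fspan {fst (\<Delta> a) (tens2 sc b b') | a b b'. True} = fspan {fst E (tens2 sc b b') | b b'. True}"
  using Wc[THEN conjunct2, THEN conjunct2, THEN conjunct2, THEN conjunct2, THEN conjunct2, THEN conjunct2, THEN conjunct2, THEN conjunct2, THEN conjunct2, THEN conjunct2, THEN conjunct2, THEN conjunct2, THEN conjunct2, THEN conjunct2, THEN conjunct2, THEN conjunct1] by blast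
lemma v: "\<exists>X. ext_value sc (id_tens_Delta sc \<Delta>) (one_tens_E sc E) E X \<and>
          ext_value sc (Delta_tens_id sc \<Delta>) (E_tens_one sc E) E X \<and>
          meq (TT3 sc) (mprod (E_tens_one sc E) (one_tens_E sc E)) X \<and>
          meq (TT3 sc) (mprod (one_tens_E sc E) (E_tens_one sc E)) X"
  using Wc[THEN conjunct2, THEN conjunct2, THEN conjunct2, THEN conjunct2, THEN conjunct2, THEN conjunct2, THEN conjunct2, THEN conjunct2, THEN conjunct2, THEN conjunct2, THEN conjunct2, THEN conjunct2, THEN conjunct2, THEN conjunct2, THEN conjunct2, THEN conjunct2, THEN conjunct2, THEN conjunct1] by blast
lemma vi1: "eps_id sc \<epsilon> (fst (one_tens sc a) (fst E (tens2 sc b c)))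
              = eps_id sc \<epsilon> (fst (\<Delta> a) (tens2 sc b c))"
  using Wc[THEN conjunct2, THEN conjunct2, THEN conjunct2, THEN conjunct2, THEN conjunct2, THEN conjunct2, THEN conjunct2, THEN conjunct2, THEN conjunct2, THEN conjunct2, THEN conjunct2, THEN conjunct2, THEN conjunct2, THEN conjunct2, THEN conjunct2, THEN conjunct2, THEN conjunct2, THEN conjunct2, THEN conjunct1] by blast
lemma vi2: "eps_id sc \<epsilon> (snd (one_tens sc c) (snd E (tens2 sc a b)))
              = eps_id sc \<epsilon> (snd (\<Delta> c) (tens2 sc a b))"
  using Wc[THEN conjunct2, THEN conjunct2, THEN conjunct2, THEN conjunct2, THEN conjunct2, THEN conjunct2, THEN conjunct2, THEN conjunct2, THEN conjunct2, THEN conjunct2, THEN conjunct2, THEN conjunct2, THEN conjunct2, THEN conjunct2, THEN conjunct2, THEN conjunct2, THEN conjunct2, THEN conjunct2, THEN conjunct2] by blast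

lemma tlinE1: "tlin (fst E)" and tlinE2: "tlin (snd E)"
  using is_mlt_tlin[OF E_mlt] by auto
lemma tlinD1: "tlin (fst (\<Delta> a))" and tlinD2: "tlin (snd (\<Delta> a))"
  using is_mlt_tlin[OF D_mlt] by auto

lemma D_add1: "s \<in> T \<Longrightarrow> fst (\<Delta> (a + b)) s = fst (\<Delta> a) s + fst (\<Delta> b) s"
  using D_add unfolding meq_def madd_def by auto
lemma D_add2: "s \<in> T \<Longrightarrow> snd (\<Delta> (a + b)) s = snd (\<Delta> a) s + snd (\<Delta> b) s"
  using D_add unfolding meq_def madd_def by auto
lemma D_sc1: "s \<in> T \<Longrightarrow> fst (\<Delta> (sc c a)) s = fsc c (fst (\<Delta> a) s)"
  using D_sc unfolding meq_def msc_def by auto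
lemma D_sc2: "s \<in> T \<Longrightarrow> snd (\<Delta> (sc c a)) s = fsc c (snd (\<Delta> a) s)"
  using D_sc unfolding meq_def msc_def by auto

lemma memb_unique:
  assumes "s \<in> T" "s' \<in> T" "\<And>u r. mult2 sc s (tens2 sc u r) = mult2 sc s' (tens2 sc u r)"
  shows "s = s'"
proof -
  have "s - s' = 0"
  proof (rule nondeg)
    show "s - s' \<in> T" using assms(1,2) by (rule diff_T)
    fix u r
    show "mult2 sc (s - s') (tens2 sc u r) = 0"
      using tlin_diff[OF mult2_tlin_l[OF tens2_T] assms(1,2)] assms(3) by simp
  qed
  thus ?thesis by simp
qed

lemma T1el_spec: "T1el sc \<Delta> a b \<in> T \<and> meq T (mprod (\<Delta> a) (one_tens sc b)) (membed (mult2 sc) (T1el sc \<Delta> a b))"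
proof -
  have "\<exists>!s. s \<in> T \<and> meq T (mprod (\<Delta> a) (one_tens sc b)) (membed (mult2 sc) s)"
  proof (rule ex_ex1I)
    show "\<exists>s. s \<in> T \<and> meq T (mprod (\<Delta> a) (one_tens sc b)) (membed (mult2 sc) s)" using exT1 by blast
  next
    fix s s' assume a: "s \<in> T \<and> meq T (mprod (\<Delta> a) (one_tens sc b)) (membed (mult2 sc) s)"
      "s' \<in> T \<and> meq T (mprod (\<Delta> a) (one_tens sc b)) (membed (mult2 sc) s')"
    show "s = s'"
      by (rule memb_unique) (use a tens2_T in \<open>auto simp: meq_def membed_def mprod_def\<close>)
  qed
  from theI'[OF this] show ?thesis unfolding T1el_def .
qed

lemma T2el_spec: "T2el sc \<Delta> a b \<in> T \<and> meq T (mprod (tens_one sc a) (\<Delta> b)) (membed (mult2 sc) (T2el sc \<Delta> a b))"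
proof -
  have "\<exists>!s. s \<in> T \<and> meq T (mprod (tens_one sc a) (\<Delta> b)) (membed (mult2 sc) s)"
  proof (rule ex_ex1I)
    show "\<exists>s. s \<in> T \<and> meq T (mprod (tens_one sc a) (\<Delta> b)) (membed (mult2 sc) s)" using exT2 by blast
  next
    fix s s' assume a: "s \<in> T \<and> meq T (mprod (tens_one sc a) (\<Delta> b)) (membed (mult2 sc) s)"
      "s' \<in> T \<and> meq T (mprod (tens_one sc a) (\<Delta> b)) (membed (mult2 sc) s')"
    show "s = s'"
      by (rule memb_unique) (use a tens2_T in \<open>auto simp: meq_def membed_def mprod_def\<close>)
  qed
  from theI'[OF this] show ?thesis unfolding T2el_def .
qed

lemma T1el_T: "T1el sc \<Delta> a b \<in> T" using T1el_spec by blast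
lemma T2el_T: "T2el sc \<Delta> a b \<in> T" using T2el_spec by blast
lemma T1el_f: "w \<in> T \<Longrightarrow> mult2 sc (T1el sc \<Delta> a b) w = fst (\<Delta> a) (fst (one_tens sc b) w)"
  using T1el_spec unfolding meq_def membed_def mprod_def by auto
lemma T1el_s: "w \<in> T \<Longrightarrow> mult2 sc w (T1el sc \<Delta> a b) = snd (one_tens sc b) (snd (\<Delta> a) w)"
  using T1el_spec unfolding meq_def membed_def mprod_def by auto
lemma T2el_f: "w \<in> T \<Longrightarrow> mult2 sc (T2el sc \<Delta> a b) w = fst (tens_one sc a) (fst (\<Delta> b) w)"
  using T2el_spec unfolding meq_def membed_def mprod_def by auto
lemma T2el_s: "w \<in> T \<Longrightarrow> mult2 sc w (T2el sc \<Delta> a b) = snd (\<Delta> b) (snd (tens_one sc a) w)"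
  using T2el_spec unfolding meq_def membed_def mprod_def by auto

lemma T1el_char: "s \<in> T \<Longrightarrow> (\<And>w. w \<in> T \<Longrightarrow> mult2 sc s w = fst (\<Delta> a) (fst (one_tens sc b) w)) \<Longrightarrow> T1el sc \<Delta> a b = s"
  by (rule memb_unique) (simp_all add: T1el_T T1el_f tens2_T)
lemma T2el_char: "s \<in> T \<Longrightarrow> (\<And>w. w \<in> T \<Longrightarrow> mult2 sc s w = fst (tens_one sc a) (fst (\<Delta> b) w)) \<Longrightarrow> T2el sc \<Delta> a b = s"
  by (rule memb_unique) (simp_all add: T2el_T T2el_f tens2_T)

end


context wmb
begin

lemma mult2_add_l: "s \<in> T \<Longrightarrow> t \<in> T \<Longrightarrow> w \<in> T \<Longrightarrow> mult2 sc (s + t) w = mult2 sc s w + mult2 sc t w"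
  using tlin_add[OF mult2_tlin_l] by blast
lemma mult2_fsc_l: "s \<in> T \<Longrightarrow> w \<in> T \<Longrightarrow> mult2 sc (fsc c s) w = fsc c (mult2 sc s w)"
  using tlin_fsc[OF mult2_tlin_l] by blast

lemma bil_T2el: "bil (T2el sc \<Delta>)"
proof (rule bilI)
  fix a a' b
  show "T2el sc \<Delta> (a + a') b = T2el sc \<Delta> a b + T2el sc \<Delta> a' b"
  proof (rule T2el_char)
    show "T2el sc \<Delta> a b + T2el sc \<Delta> a' b \<in> T" by (simp add: add_T T2el_T)
    fix w assume w: "w \<in> T"
    show "mult2 sc (T2el sc \<Delta> a b + T2el sc \<Delta> a' b) w = fst (tens_one sc (a + a')) (fst (\<Delta> b) w)"
      by (simp add: mult2_add_l T2el_T w T2el_f tens_one_add tlin_T[OF tlinD1])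
  qed
next
  fix a b b'
  show "T2el sc \<Delta> a (b + b') = T2el sc \<Delta> a b + T2el sc \<Delta> a b'"
  proof (rule T2el_char)
    show "T2el sc \<Delta> a b + T2el sc \<Delta> a b' \<in> T" by (simp add: add_T T2el_T)
    fix w assume w: "w \<in> T"
    show "mult2 sc (T2el sc \<Delta> a b + T2el sc \<Delta> a b') w = fst (tens_one sc a) (fst (\<Delta> (b + b')) w)"
      by (simp add: mult2_add_l T2el_T w T2el_f D_add1 tlin_add[OF tlin_tens_one(1)] tlin_T[OF tlinD1])
  qed
next
  fix c a b
  have "T2el sc \<Delta> (sc c a) b = fsc c (T2el sc \<Delta> a b)"
  proof (rule T2el_char)
    show "fsc c (T2el sc \<Delta> a b) \<in> T" by (simp add: fsc_T T2el_T)
    fix w assume w: "w \<in> T"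
    show "mult2 sc (fsc c (T2el sc \<Delta> a b)) w = fst (tens_one sc (sc c a)) (fst (\<Delta> b) w)"
      by (simp add: mult2_fsc_l T2el_T w T2el_f tens_one_sc tlin_T[OF tlinD1])
  qed
  moreover have "T2el sc \<Delta> a (sc c b) = fsc c (T2el sc \<Delta> a b)"
  proof (rule T2el_char)
    show "fsc c (T2el sc \<Delta> a b) \<in> T" by (simp add: fsc_T T2el_T)
    fix w assume w: "w \<in> T"
    show "mult2 sc (fsc c (T2el sc \<Delta> a b)) w = fst (tens_one sc a) (fst (\<Delta> (sc c b)) w)"
      by (simp add: mult2_fsc_l T2el_T w T2el_f D_sc1 tlin_fsc[OF tlin_tens_one(1)] tlin_T[OF tlinD1])
  qed
  ultimately show "T2el sc \<Delta> (sc c a) b = T2el sc \<Delta> a (sc c b)" by simp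
qed

lemma bil_T1el: "bil (T1el sc \<Delta>)"
proof (rule bilI)
  fix a a' b
  show "T1el sc \<Delta> (a + a') b = T1el sc \<Delta> a b + T1el sc \<Delta> a' b"
  proof (rule T1el_char)
    show "T1el sc \<Delta> a b + T1el sc \<Delta> a' b \<in> T" by (simp add: add_T T1el_T)
    fix w assume w: "w \<in> T"
    show "mult2 sc (T1el sc \<Delta> a b + T1el sc \<Delta> a' b) w = fst (\<Delta> (a + a')) (fst (one_tens sc b) w)"
      by (simp add: mult2_add_l T1el_T w T1el_f D_add1 tlin_T[OF tlin_one_tens(1)])
  qed
next
  fix a b b'
  show "T1el sc \<Delta> a (b + b') = T1el sc \<Delta> a b + T1el sc \<Delta> a b'"
  proof (rule T1el_char)
    show "T1el sc \<Delta> a b + T1el sc \<Delta> a b' \<in> T" by (simp add: add_T T1el_T)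
    fix w assume w: "w \<in> T"
    show "mult2 sc (T1el sc \<Delta> a b + T1el sc \<Delta> a b') w = fst (\<Delta> a) (fst (one_tens sc (b + b')) w)"
      by (simp add: mult2_add_l T1el_T w T1el_f one_tens_add tlin_add[OF tlinD1] tlin_T[OF tlin_one_tens(1)])
  qed
next
  fix c a b
  have "T1el sc \<Delta> (sc c a) b = fsc c (T1el sc \<Delta> a b)"
  proof (rule T1el_char)
    show "fsc c (T1el sc \<Delta> a b) \<in> T" by (simp add: fsc_T T1el_T)
    fix w assume w: "w \<in> T"
    show "mult2 sc (fsc c (T1el sc \<Delta> a b)) w = fst (\<Delta> (sc c a)) (fst (one_tens sc b) w)"
      by (simp add: mult2_fsc_l T1el_T w T1el_f D_sc1 tlin_T[OF tlin_one_tens(1)])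
  qed
  moreover have "T1el sc \<Delta> a (sc c b) = fsc c (T1el sc \<Delta> a b)"
  proof (rule T1el_char)
    show "fsc c (T1el sc \<Delta> a b) \<in> T" by (simp add: fsc_T T1el_T)
    fix w assume w: "w \<in> T"
    show "mult2 sc (fsc c (T1el sc \<Delta> a b)) w = fst (\<Delta> a) (fst (one_tens sc (sc c b)) w)"
      by (simp add: mult2_fsc_l T1el_T w T1el_f one_tens_sc tlin_fsc[OF tlinD1] tlin_T[OF tlin_one_tens(1)])
  qed
  ultimately show "T1el sc \<Delta> (sc c a) b = T1el sc \<Delta> a (sc c b)" by simp
qed

lemma T1_single: "T1 sc \<Delta> (tens2 sc a b) = T1el sc \<Delta> a b"
  unfolding T1_def by (rule lift2_single[OF bil_T1el])
lemma T2_single: "T2 sc \<Delta> (tens2 sc a b) = T2el sc \<Delta> a b"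
  unfolding T2_def by (rule lift2_single[OF bil_T2el])

lemma iii1: "eps_id sc \<epsilon> (T1el sc \<Delta> a b) = a * b"
  using iii[OF tens2_T, of a b] by (simp add: T1_single mu_single)
lemma iii2: "id_eps sc \<epsilon> (T2el sc \<Delta> a b) = a * b"
  using iii[OF tens2_T, of a b] by (simp add: T2_single mu_single)

end


context wmb
begin

abbreviation "eI \<equiv> eps_id sc \<epsilon>"
abbreviation "Ie \<equiv> id_eps sc \<epsilon>"

lemmas eI_sum = eps_id_sum[OF eps] and Ie_sum = id_eps_sum[OF eps]
   and eI_single = eps_id_single[OF eps] and Ie_single = id_eps_single[OF eps]

lemma eps_sum: "\<epsilon> (\<Sum>i\<in>I. g i) = (\<Sum>i\<in>I. \<epsilon> (g i))" by (rule lin_sum[OF eps])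
lemma eps_sc: "\<epsilon> (sc c x) = c * \<epsilon> x" by (rule lin_sc[OF eps])

lemma one_imp_mult:
  assumes E1: "meq T E mone"
  shows "\<epsilon> (p * c) = \<epsilon> p * \<epsilon> c"
proof -
  have E1s: "snd E x = x" if "x \<in> T" for x using E1 that unfolding meq_def mone_def by simp
  have key: "\<epsilon> (x * (a * c)) = \<epsilon> (x * a) * \<epsilon> c" for x a
  proof -
    obtain n u u' where u: "T2el sc \<Delta> a c = (\<Sum>i<(n::nat). tens2 sc (u i) (u' i))"
      using T2el_T by (rule TT2E)
    have A: "eI (mult2 sc (tens2 sc x y) (T2el sc \<Delta> a c)) = sc (\<epsilon> (x * a)) (y * c)" for y
    proof -
      have "mult2 sc (tens2 sc x y) (T2el sc \<Delta> a c) = snd (\<Delta> c) (tens2 sc (x * a) y)"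
        by (simp add: T2el_s tens2_T tens_one_single)
      moreover have "eI (snd (\<Delta> c) (tens2 sc (x * a) y)) = sc (\<epsilon> (x * a)) (y * c)"
        using vi2[of c "x * a" y] by (simp add: E1s tens2_T one_tens_single eI_single)
      ultimately show ?thesis by simp
    qed
    have B: "eI (mult2 sc (tens2 sc x y) (T2el sc \<Delta> a c)) = y * (\<Sum>i<n. sc (\<epsilon> (x * u i)) (u' i))" for y
      unfolding u mult2_sum_l eI_sum by (simp add: sum_distrib_left sc_mult_r)
    have C: "(\<Sum>i<n. sc (\<epsilon> (x * u i)) (u' i)) = sc (\<epsilon> (x * a)) c"
    proof -
      have "(\<Sum>i<n. sc (\<epsilon> (x * u i)) (u' i)) - sc (\<epsilon> (x * a)) c = 0"
      proof (rule ndl, intro allI)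
        fix y
        show "y * ((\<Sum>i<n. sc (\<epsilon> (x * u i)) (u' i)) - sc (\<epsilon> (x * a)) c) = 0"
          using A[of y] B[of y] by (simp add: right_diff_distrib sc_mult_r)
      qed
      thus ?thesis by simp
    qed
    have D: "(\<Sum>i<n. \<epsilon> (x * u i) * \<epsilon> (u' i)) = \<epsilon> (x * a) * \<epsilon> c"
      using arg_cong[OF C, of \<epsilon>] by (simp add: eps_sum eps_sc)
    have "Ie (T2el sc \<Delta> a c) = a * c" by (rule iii2)
    hence F: "(\<Sum>i<n. sc (\<epsilon> (u' i)) (u i)) = a * c" unfolding u Ie_sum .
    have "\<epsilon> (x * (a * c)) = (\<Sum>i<n. \<epsilon> (u' i) * \<epsilon> (x * u i))"
      unfolding F[symmetric] by (simp add: sum_distrib_left sc_mult_r[symmetric] eps_sum eps_sc)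
    thus ?thesis using D by (simp add: mult.commute)
  qed
  obtain n x a where p: "p = (\<Sum>i<(n::nat). x i * a i)" using idem by blast
  have "\<epsilon> (p * c) = (\<Sum>i<n. \<epsilon> (x i * (a i * c)))"
    unfolding p by (simp add: sum_distrib_right eps_sum mult.assoc)
  also have "\<dots> = (\<Sum>i<n. \<epsilon> (x i * a i)) * \<epsilon> c" by (simp add: key sum_distrib_right)
  also have "\<dots> = \<epsilon> p * \<epsilon> c" unfolding p by (simp add: eps_sum)
  finally show ?thesis .
qed

end


context wmb
begin

lemma bil_tens2: "bil (tens2 sc)"
  by (rule bilI) (simp_all add: tens2_add_l tens2_add_r tens2_sc_l tens2_sc_r)

lemma G5: "t \<in> T \<Longrightarrow> Ie (fst (tens_one sc p) t) = p * Ie t"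
  by (erule TT2E) (simp add: tens_one_sum Ie_sum sum_distrib_left sc_mult_r)
lemma G6: "t \<in> T \<Longrightarrow> eI (fst (one_tens sc a) t) = a * eI t"
  by (erule TT2E) (simp add: one_tens_sum eI_sum sum_distrib_left sc_mult_r)

context
  assumes M: "\<And>a b. \<epsilon> (a * b) = \<epsilon> a * \<epsilon> b"
begin

lemma G1: "t \<in> T \<Longrightarrow> eI (mult2 sc t (tens2 sc b c)) = sc (\<epsilon> b) (eI t * c)"
  by (erule TT2E) (simp add: mult2_sum_r eI_sum M sum_sc_mult_r sc_sum_r sc_sc mult.commute)
lemma G2: "t \<in> T \<Longrightarrow> Ie (mult2 sc t (tens2 sc b c)) = sc (\<epsilon> c) (Ie t * b)"
  by (erule TT2E) (simp add: mult2_sum_r Ie_sum M sum_sc_mult_r sc_sum_r sc_sc mult.commute)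
lemma G3: "t \<in> T \<Longrightarrow> Ie (mult2 sc (tens2 sc b c) t) = sc (\<epsilon> c) (b * Ie t)"
  by (erule TT2E) (simp add: mult2_sum_l Ie_sum M sum_distrib_left sc_mult_r sc_sum_r sc_sc mult.commute)
lemma G4: "t \<in> T \<Longrightarrow> eI (fst (tens_one sc a) t) = sc (\<epsilon> a) (eI t)"
  by (erule TT2E) (simp add: tens_one_sum eI_sum M sc_sum_r sc_sc)
lemma G7: "t \<in> T \<Longrightarrow> Ie (snd (one_tens sc a) t) = sc (\<epsilon> a) (Ie t)"
  by (erule TT2E) (simp add: one_tens_sum Ie_sum M sc_sum_r sc_sc mult.commute)

lemma L2a: "eI (fst (\<Delta> a) (tens2 sc b c)) = sc (\<epsilon> b) (a * c)"
proof -
  obtain n c1 c2 where c: "c = (\<Sum>i<(n::nat). c1 i * c2 i)" using idem by blast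
  have "tens2 sc b c = (\<Sum>i<n. fst (one_tens sc (c1 i)) (tens2 sc b (c2 i)))"
    unfolding c bil_sum_r[OF bil_tens2] by (simp add: one_tens_single)
  hence "fst (\<Delta> a) (tens2 sc b c) = (\<Sum>i<n. mult2 sc (T1el sc \<Delta> a (c1 i)) (tens2 sc b (c2 i)))"
    by (simp add: tlin_sum[OF tlinD1] tlin_T[OF tlin_one_tens(1)] tens2_T T1el_f)
  hence "eI (fst (\<Delta> a) (tens2 sc b c)) = (\<Sum>i<n. eI (mult2 sc (T1el sc \<Delta> a (c1 i)) (tens2 sc b (c2 i))))"
    by (simp add: eps_id_sumT[OF eps] mult2_T T1el_T tens2_T)
  also have "\<dots> = (\<Sum>i<n. sc (\<epsilon> b) (a * c1 i * c2 i))" by (simp add: G1 T1el_T iii1)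
  also have "\<dots> = sc (\<epsilon> b) (a * c)" unfolding c by (simp add: sc_sum_r sum_distrib_left mult.assoc)
  finally show ?thesis .
qed

lemma L2f: "Ie (snd (\<Delta> b) (tens2 sc p q)) = sc (\<epsilon> q) (p * b)"
proof -
  obtain n p1 p2 where p: "p = (\<Sum>i<(n::nat). p1 i * p2 i)" using idem by blast
  have "tens2 sc p q = (\<Sum>i<n. snd (tens_one sc (p2 i)) (tens2 sc (p1 i) q))"
    unfolding p bil_sum_l[OF bil_tens2] by (simp add: tens_one_single)
  hence "snd (\<Delta> b) (tens2 sc p q) = (\<Sum>i<n. mult2 sc (tens2 sc (p1 i) q) (T2el sc \<Delta> (p2 i) b))"
    by (simp add: tlin_sum[OF tlinD2] tlin_T[OF tlin_tens_one(2)] tens2_T T2el_s)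
  hence "Ie (snd (\<Delta> b) (tens2 sc p q)) = (\<Sum>i<n. Ie (mult2 sc (tens2 sc (p1 i) q) (T2el sc \<Delta> (p2 i) b)))"
    by (simp add: id_eps_sumT[OF eps] mult2_T T2el_T tens2_T)
  also have "\<dots> = (\<Sum>i<n. sc (\<epsilon> q) (p1 i * (p2 i * b)))" by (simp add: G3 T2el_T iii2)
  also have "\<dots> = sc (\<epsilon> q) (p * b)" unfolding p by (simp add: sc_sum_r sum_distrib_right mult.assoc)
  finally show ?thesis .
qed

lemma L2b: "Ie (fst (\<Delta> x) (tens2 sc u v)) = sc (\<epsilon> v) (x * u)"
proof -
  have "Ie (fst (\<Delta> x) (tens2 sc u v)) - sc (\<epsilon> v) (x * u) = 0"
  proof (rule ndl, intro allI)
    fix p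
    have "p * Ie (fst (\<Delta> x) (tens2 sc u v)) = Ie (fst (tens_one sc p) (fst (\<Delta> x) (tens2 sc u v)))"
      by (simp add: G5 tlin_T[OF tlinD1] tens2_T)
    also have "\<dots> = Ie (mult2 sc (T2el sc \<Delta> p x) (tens2 sc u v))" by (simp add: T2el_f tens2_T)
    also have "\<dots> = p * sc (\<epsilon> v) (x * u)" by (simp add: G2 T2el_T iii2 sc_mult_r mult.assoc)
    finally show "p * (Ie (fst (\<Delta> x) (tens2 sc u v)) - sc (\<epsilon> v) (x * u)) = 0"
      by (simp add: right_diff_distrib)
  qed
  thus ?thesis by simp
qed

lemma L2c: "eI (fst E (tens2 sc n z)) = sc (\<epsilon> n) z"
proof -
  have "eI (fst E (tens2 sc n z)) - sc (\<epsilon> n) z = 0"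
  proof (rule ndl, intro allI)
    fix a
    have "a * eI (fst E (tens2 sc n z)) = eI (fst (one_tens sc a) (fst E (tens2 sc n z)))"
      by (simp add: G6 tlin_T[OF tlinE1] tens2_T)
    also have "\<dots> = a * sc (\<epsilon> n) z" by (simp add: vi1 L2a sc_mult_r)
    finally show "a * (eI (fst E (tens2 sc n z)) - sc (\<epsilon> n) z) = 0"
      by (simp add: right_diff_distrib)
  qed
  thus ?thesis by simp
qed

context
  fixes p0 assumes p0: "\<epsilon> p0 = 1"
begin

lemma L2d: "eI (T2el sc \<Delta> a b) = sc (\<epsilon> a) b"
proof -
  have "eI (T2el sc \<Delta> a b) - sc (\<epsilon> a) b = 0"
  proof (rule ndr, intro allI)
    fix y
    have "eI (T2el sc \<Delta> a b) * y = eI (mult2 sc (T2el sc \<Delta> a b) (tens2 sc p0 y))"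
      by (simp add: G1 T2el_T p0 sc_one)
    also have "\<dots> = eI (fst (tens_one sc a) (fst (\<Delta> b) (tens2 sc p0 y)))" by (simp add: T2el_f tens2_T)
    also have "\<dots> = sc (\<epsilon> a) b * y" by (simp add: G4 tlin_T[OF tlinD1] tens2_T L2a p0 sc_one sc_mult_l)
    finally show "(eI (T2el sc \<Delta> a b) - sc (\<epsilon> a) b) * y = 0"
      by (simp add: left_diff_distrib)
  qed
  thus ?thesis by simp
qed

lemma L2e: "Ie (T1el sc \<Delta> b a) = sc (\<epsilon> a) b"
proof -
  have "Ie (T1el sc \<Delta> b a) - sc (\<epsilon> a) b = 0"
  proof (rule ndl, intro allI)
    fix p
    have "p * Ie (T1el sc \<Delta> b a) = Ie (mult2 sc (tens2 sc p p0) (T1el sc \<Delta> b a))"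
      by (simp add: G3 T1el_T p0 sc_one)
    also have "\<dots> = Ie (snd (one_tens sc a) (snd (\<Delta> b) (tens2 sc p p0)))" by (simp add: T1el_s tens2_T)
    also have "\<dots> = p * sc (\<epsilon> a) b" by (simp add: G7 tlin_T[OF tlinD2] tens2_T L2f p0 sc_one sc_mult_r)
    finally show "p * (Ie (T1el sc \<Delta> b a) - sc (\<epsilon> a) b) = 0"
      by (simp add: right_diff_distrib)
  qed
  thus ?thesis by simp
qed

end
end

end


context wmb
begin

lemma E_idem1: "s \<in> T \<Longrightarrow> fst E (fst E s) = fst E s"
  using E_idem unfolding meq_def mprod_def by auto

lemma S1: "fst E (fst (\<Delta> x) (tens2 sc u v)) = fst (\<Delta> x) (tens2 sc u v)"
proof -
  let ?s = "fst (\<Delta> x) (tens2 sc u v)"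
  have "?s \<in> fspan {fst (\<Delta> a) (tens2 sc b b') | a b b'. True}"
    unfolding fspan_def
    by (rule CollectI, rule exI[of _ "1::nat"], rule exI[of _ "\<lambda>_. 1"], rule exI[of _ "\<lambda>_. ?s"]) auto
  hence "?s \<in> fspan {fst E (tens2 sc b b') | b b'. True}" using iv by simp
  then obtain n c y where s: "?s = (\<Sum>i<(n::nat). fsc (c i) (y i))"
    and y: "\<forall>i<n. y i \<in> {fst E (tens2 sc b b') | b b'. True}"
    unfolding fspan_def by blast
  have yT: "y i \<in> T" and yE: "fst E (y i) = y i" if "i < n" for i
    using y that by (auto simp: tlin_T[OF tlinE1] tens2_T E_idem1)
  have "fst E ?s = (\<Sum>i<n. fst E (fsc (c i) (y i)))"
    unfolding s by (rule tlin_sum[OF tlinE1]) (simp add: fsc_T yT)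
  also have "\<dots> = ?s" unfolding s by (rule sum.cong) (simp_all add: tlin_fsc[OF tlinE1] yT yE)
  finally show ?thesis .
qed

lemma tri_Dt: assumes F: "tlin F" shows "tri (\<lambda>u v r. rtens sc (F (tens2 sc u v)) (y * r))"
proof (rule triI)
  fix a a' b d show "rtens sc (F (tens2 sc (a + a') b)) (y * d) = rtens sc (F (tens2 sc a b)) (y * d) + rtens sc (F (tens2 sc a' b)) (y * d)"
    by (simp add: tens2_add_l tlin_add[OF F] tens2_T rtens_add_l tlin_T[OF F])
next
  fix a b b' d show "rtens sc (F (tens2 sc a (b + b'))) (y * d) = rtens sc (F (tens2 sc a b)) (y * d) + rtens sc (F (tens2 sc a b')) (y * d)"
    by (simp add: tens2_add_r tlin_add[OF F] tens2_T rtens_add_l tlin_T[OF F])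
next
  fix a b d d' show "rtens sc (F (tens2 sc a b)) (y * (d + d')) = rtens sc (F (tens2 sc a b)) (y * d) + rtens sc (F (tens2 sc a b)) (y * d')"
    by (simp add: distrib_left rtens_add_r tlin_T[OF F] tens2_T)
next
  fix c a b d show "rtens sc (F (tens2 sc (sc c a) b)) (y * d) = rtens sc (F (tens2 sc a (sc c b))) (y * d)"
    by (simp add: tens2_sc_l tens2_sc_r)
next
  fix c a b d show "rtens sc (F (tens2 sc a (sc c b))) (y * d) = rtens sc (F (tens2 sc a b)) (y * sc c d)"
    by (simp add: tens2_sc_r tlin_fsc[OF F] tens2_T rtens_fsc tlin_T[OF F] sc_mult_r)
qed

lemma bil_Dt: "bil (\<lambda>x y. rtens sc (fst (\<Delta> x) (tens2 sc u v)) (y * r))"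
proof (rule bilI)
  fix a a' b show "rtens sc (fst (\<Delta> (a + a')) (tens2 sc u v)) (b * r) = rtens sc (fst (\<Delta> a) (tens2 sc u v)) (b * r) + rtens sc (fst (\<Delta> a') (tens2 sc u v)) (b * r)"
    by (simp add: D_add1 tens2_T rtens_add_l tlin_T[OF tlinD1])
next
  fix a b b' show "rtens sc (fst (\<Delta> a) (tens2 sc u v)) ((b + b') * r) = rtens sc (fst (\<Delta> a) (tens2 sc u v)) (b * r) + rtens sc (fst (\<Delta> a) (tens2 sc u v)) (b' * r)"
    by (simp add: distrib_right rtens_add_r tlin_T[OF tlinD1] tens2_T)
next
  fix c a b show "rtens sc (fst (\<Delta> (sc c a)) (tens2 sc u v)) (b * r) = rtens sc (fst (\<Delta> a) (tens2 sc u v)) (sc c b * r)"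
    by (simp add: D_sc1 tens2_T rtens_fsc tlin_T[OF tlinD1] sc_mult_l)
qed

lemma Dt_inner: "(\<lambda>x y. lift3 sc (\<lambda>u v r. rtens sc (fst (\<Delta> x) (tens2 sc u v)) (y * r)) (tens3 sc u v r))
   = (\<lambda>x y. rtens sc (fst (\<Delta> x) (tens2 sc u v)) (y * r))"
  by (simp add: lift3_single[OF tri_Dt[OF tlinD1]])

lemma Dt_sum: "fst (Delta_tens_id sc \<Delta> (\<Sum>j<(n::nat). tens2 sc (f j) (f' j))) (tens3 sc u v r)
   = (\<Sum>j<n. rtens sc (fst (\<Delta> (f j)) (tens2 sc u v)) (f' j * r))"
  unfolding Delta_tens_id_def fst_conv Dt_inner by (rule lift2_sum[OF bil_Dt])

lemma Dt_single: "fst (Delta_tens_id sc \<Delta> (tens2 sc x y)) (tens3 sc u v r)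
   = rtens sc (fst (\<Delta> x) (tens2 sc u v)) (y * r)"
  unfolding Delta_tens_id_def fst_conv Dt_inner by (rule lift2_single[OF bil_Dt])

end


context wmb
begin

lemma Phi_sumT': "(\<And>i. i \<in> I \<Longrightarrow> g i \<in> T3) \<Longrightarrow> Phi \<epsilon> (\<Sum>i\<in>I. g i) = (\<Sum>i\<in>I. Phi \<epsilon> (g i))"
  by (rule Phi_sumT[OF eps])

lemma mult_imp_one:
  assumes M: "\<And>a b. \<epsilon> (a * b) = \<epsilon> a * \<epsilon> b" and p0: "\<epsilon> p0 = 1"
  shows "meq T E mone"
proof -
  obtain X where X1: "ext_value sc (Delta_tens_id sc \<Delta>) (E_tens_one sc E) E X"
    and X2: "meq T3 (mprod (one_tens_E sc E) (E_tens_one sc E)) X" using v by blast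
  have Xg: "fst X (fst (Delta_tens_id sc \<Delta> t) w) = fst (Delta_tens_id sc \<Delta> (fst E t)) w"
    if "t \<in> T" "w \<in> T3" for t w using X1 that unfolding ext_value_def by blast
  have Xm: "fst X Y = fst (one_tens_E sc E) (fst (E_tens_one sc E) Y)" if "Y \<in> T3" for Y
    using X2 that unfolding meq_def mprod_def by auto
  have single: "fst E (tens2 sc x y) = tens2 sc x y" for x y
  proof (rule memb_unique)
    show "fst E (tens2 sc x y) \<in> T" by (simp add: tlin_T[OF tlinE1] tens2_T)
    show "tens2 sc x y \<in> T" by (rule tens2_T)
    fix u r
    let ?s = "fst (\<Delta> x) (tens2 sc u p0)"
    let ?z = "y * r"
    have sT: "?s \<in> T" by (simp add: tlin_T[OF tlinD1] tens2_T)
    obtain n s s' where s: "?s = (\<Sum>i<(n::nat). tens2 sc (s i) (s' i))" using sT by (rule TT2E)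
    have Y: "fst (Delta_tens_id sc \<Delta> (tens2 sc x y)) (tens3 sc u p0 r) = (\<Sum>i<n. tens3 sc (s i) (s' i) ?z)"
      unfolding Dt_single s rtens_sum ..
    have ET: "fst (E_tens_one sc E) (\<Sum>i<n. tens3 sc (s i) (s' i) ?z) = (\<Sum>i<n. tens3 sc (s i) (s' i) ?z)"
    proof -
      have "fst (E_tens_one sc E) (\<Sum>i<n. tens3 sc (s i) (s' i) ?z) = (\<Sum>i<n. rtens sc (fst E (tens2 sc (s i) (s' i))) ?z)"
        by (rule E_tens_one_sum[OF tlinE1])
      also have "\<dots> = rtens sc (\<Sum>i<n. fst E (tens2 sc (s i) (s' i))) ?z"
        unfolding rtens_def by (rule lift2_sumT[OF bil_rtens, symmetric]) (simp add: tlin_T[OF tlinE1] tens2_T)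
      also have "\<dots> = rtens sc (fst E ?s) ?z"
        unfolding s by (subst tlin_sum[OF tlinE1]) (simp_all add: tens2_T)
      also have "\<dots> = (\<Sum>i<n. tens3 sc (s i) (s' i) ?z)" unfolding S1 unfolding s rtens_sum ..
      finally show ?thesis .
    qed
    have "Phi \<epsilon> (fst X (fst (Delta_tens_id sc \<Delta> (tens2 sc x y)) (tens3 sc u p0 r)))
        = Phi \<epsilon> (\<Sum>i<n. ltens sc (s i) (fst E (tens2 sc (s' i) ?z)))"
      unfolding Y by (simp add: Xm sum_T3 tens3_T ET one_tens_E_sum[OF tlinE1])
    also have "\<dots> = (\<Sum>i<n. tens2 sc (s i) (eI (fst E (tens2 sc (s' i) ?z))))"
      by (simp add: Phi_sumT' ltens_T3 tlin_T[OF tlinE1] tens2_T Phi_ltens[OF eps])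
    also have "\<dots> = tens2 sc (Ie ?s) ?z"
      unfolding s Ie_sum by (simp add: L2c[OF M] tens2_sc_l tens2_sc_r bil_sum_l[OF bil_tens2])
    also have "\<dots> = mult2 sc (tens2 sc x y) (tens2 sc u r)"
      by (simp add: L2b[OF M] p0 sc_one mult2_single)
    finally have L: "Phi \<epsilon> (fst X (fst (Delta_tens_id sc \<Delta> (tens2 sc x y)) (tens3 sc u p0 r)))
        = mult2 sc (tens2 sc x y) (tens2 sc u r)" .
    obtain m f f' where f: "fst E (tens2 sc x y) = (\<Sum>j<(m::nat). tens2 sc (f j) (f' j))"
      using tlin_T[OF tlinE1 tens2_T] by (rule TT2E)
    have "Phi \<epsilon> (fst (Delta_tens_id sc \<Delta> (fst E (tens2 sc x y))) (tens3 sc u p0 r))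
        = (\<Sum>j<m. Phi \<epsilon> (rtens sc (fst (\<Delta> (f j)) (tens2 sc u p0)) (f' j * r)))"
      unfolding f Dt_sum by (simp add: Phi_sumT' rtens_T3 tlin_T[OF tlinD1] tens2_T)
    also have "\<dots> = mult2 sc (fst E (tens2 sc x y)) (tens2 sc u r)"
      unfolding f mult2_sum_r
      by (simp add: Phi_rtens[OF eps] tlin_T[OF tlinD1] tens2_T L2b[OF M] p0 sc_one)
    finally have R: "Phi \<epsilon> (fst (Delta_tens_id sc \<Delta> (fst E (tens2 sc x y))) (tens3 sc u p0 r))
        = mult2 sc (fst E (tens2 sc x y)) (tens2 sc u r)" .
    show "mult2 sc (fst E (tens2 sc x y)) (tens2 sc u r) = mult2 sc (tens2 sc x y) (tens2 sc u r)"
      using L R Xg[OF tens2_T tens3_T] by simp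
  qed
  have fstE: "fst E t = t" if tT: "t \<in> T" for t
  proof -
    obtain n a b where t: "t = (\<Sum>i<(n::nat). tens2 sc (a i) (b i))" using tT by (rule TT2E)
    show ?thesis unfolding t by (simp add: tlin_sum[OF tlinE1] tens2_T single)
  qed
  have sndE: "snd E t = t" if "t \<in> T" for t
  proof (rule memb_unique)
    show "snd E t \<in> T" by (simp add: tlin_T[OF tlinE2] that)
    show "t \<in> T" by fact
    fix u r
    have "mult2 sc t (fst E (tens2 sc u r)) = mult2 sc (snd E t) (tens2 sc u r)"
      using E_mlt that tens2_T unfolding is_mlt_def by blast
    thus "mult2 sc (snd E t) (tens2 sc u r) = mult2 sc t (tens2 sc u r)"
      using fstE[OF tens2_T] by simp
  qed
  show ?thesis unfolding meq_def mone_def using fstE sndE by simp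
qed

end


context wmb
begin

lemma eps_eI_Ie: "t \<in> T \<Longrightarrow> \<epsilon> (eI t) = \<epsilon> (Ie t)"
  by (erule TT2E) (simp add: eI_sum Ie_sum eps_sum eps_sc mult.commute)

lemma main_nontriv:
  assumes p0: "\<epsilon> p0 = 1"
  shows "(meq T E mone \<longleftrightarrow> (\<forall>a b. \<epsilon> (a * b) = \<epsilon> a * \<epsilon> b)) \<and>
         (meq T E mone \<longleftrightarrow> (\<forall>a. meq UNIV (PiL sc E \<Delta> \<epsilon> a) (msc sc (\<epsilon> a) mone))) \<and>
         (meq T E mone \<longleftrightarrow> (\<forall>a. meq UNIV (PiR sc E \<Delta> \<epsilon> a) (msc sc (\<epsilon> a) mone)))"
proof -
  have M_E: "meq T E mone" if M: "\<forall>a b. \<epsilon> (a * b) = \<epsilon> a * \<epsilon> b"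
    using mult_imp_one[OF _ p0] M by blast
  have E_M: "\<forall>a b. \<epsilon> (a * b) = \<epsilon> a * \<epsilon> b" if "meq T E mone"
    using one_imp_mult[OF that] by blast
  have E1: "fst E t = t" "snd E t = t" if "meq T E mone" "t \<in> T" for t
    using that unfolding meq_def mone_def by auto
  have M_PL: "\<forall>a. meq UNIV (PiL sc E \<Delta> \<epsilon> a) (msc sc (\<epsilon> a) mone)" if M: "\<forall>a b. \<epsilon> (a * b) = \<epsilon> a * \<epsilon> b"
  proof -
    have M': "\<And>a b. \<epsilon> (a * b) = \<epsilon> a * \<epsilon> b" using M by blast
    show ?thesis unfolding meq_def PiL_def msc_def mone_def
      by (simp add: T2_single L2d[OF M' p0] E1[OF M_E[OF M] tens2_T] eI_single)
  qed
  have M_PR: "\<forall>a. meq UNIV (PiR sc E \<Delta> \<epsilon> a) (msc sc (\<epsilon> a) mone)" if M: "\<forall>a b. \<epsilon> (a * b) = \<epsilon> a * \<epsilon> b"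
  proof -
    have M': "\<And>a b. \<epsilon> (a * b) = \<epsilon> a * \<epsilon> b" using M by blast
    show ?thesis unfolding meq_def PiR_def msc_def mone_def
      by (simp add: T1_single L2e[OF M' p0] E1[OF M_E[OF M] tens2_T] Ie_single)
  qed
  have PL_M: "\<forall>a b. \<epsilon> (a * b) = \<epsilon> a * \<epsilon> b" if PL: "\<forall>a. meq UNIV (PiL sc E \<Delta> \<epsilon> a) (msc sc (\<epsilon> a) mone)"
  proof (intro allI)
    fix a b
    have "eI (T2el sc \<Delta> a b) = sc (\<epsilon> a) b"
      using PL unfolding meq_def PiL_def msc_def mone_def by (simp add: T2_single)
    hence "\<epsilon> (eI (T2el sc \<Delta> a b)) = \<epsilon> a * \<epsilon> b" by (simp add: eps_sc)
    thus "\<epsilon> (a * b) = \<epsilon> a * \<epsilon> b" by (simp add: eps_eI_Ie T2el_T iii2)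
  qed
  have PR_M: "\<forall>a b. \<epsilon> (a * b) = \<epsilon> a * \<epsilon> b" if PR: "\<forall>a. meq UNIV (PiR sc E \<Delta> \<epsilon> a) (msc sc (\<epsilon> a) mone)"
  proof (intro allI)
    fix a b
    have "Ie (T1el sc \<Delta> a b) = sc (\<epsilon> b) a"
      using PR unfolding meq_def PiR_def msc_def mone_def by (simp add: T1_single)
    hence "\<epsilon> (Ie (T1el sc \<Delta> a b)) = \<epsilon> a * \<epsilon> b" by (simp add: eps_sc mult.commute)
    thus "\<epsilon> (a * b) = \<epsilon> a * \<epsilon> b" by (simp add: eps_eI_Ie[symmetric] T1el_T iii1)
  qed
  show ?thesis using M_E E_M M_PL M_PR PL_M PR_M by blast
qed

lemma main_triv:
  assumes z: "\<And>p. \<epsilon> p = 0"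
  shows "(meq T E mone \<longleftrightarrow> (\<forall>a b. \<epsilon> (a * b) = \<epsilon> a * \<epsilon> b)) \<and>
         (meq T E mone \<longleftrightarrow> (\<forall>a. meq UNIV (PiL sc E \<Delta> \<epsilon> a) (msc sc (\<epsilon> a) mone))) \<and>
         (meq T E mone \<longleftrightarrow> (\<forall>a. meq UNIV (PiR sc E \<Delta> \<epsilon> a) (msc sc (\<epsilon> a) mone)))"
proof -
  have prod0: "a * b = 0" for a b :: 'a
  proof -
    obtain n t t' where t: "T1el sc \<Delta> a b = (\<Sum>i<(n::nat). tens2 sc (t i) (t' i))" using T1el_T by (rule TT2E)
    have "a * b = eI (T1el sc \<Delta> a b)" by (simp add: iii1)
    also have "\<dots> = 0" unfolding t eI_sum by (simp add: z)
    finally show ?thesis .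
  qed
  have all0: "x = 0" for x :: 'a by (rule ndr) (simp add: prod0)
  have T0: "t = 0" if "t \<in> T" for t
  proof -
    obtain n a b where t: "t = (\<Sum>i<(n::nat). tens2 sc (a i) (b i))" using \<open>t \<in> T\<close> by (rule TT2E)
    show ?thesis unfolding t by (subst all0[of "a _"]) simp
  qed
  have E1: "meq T E mone" unfolding meq_def mone_def
    using T0 tlin_zero[OF tlinE1] tlin_zero[OF tlinE2] by auto
  have A: "\<forall>a b. \<epsilon> (a * b) = \<epsilon> a * \<epsilon> b" by (simp add: z)
  have B: "meq UNIV (m1 :: 'a mlt) m2" for m1 m2 unfolding meq_def by (simp add: all0[of "fst m1 _"] all0[of "snd m1 _"] all0[of "fst m2 _"] all0[of "snd m2 _"])
  show ?thesis using E1 A B by blast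
qed

lemma main:
  "(meq T E mone \<longleftrightarrow> (\<forall>a b. \<epsilon> (a * b) = \<epsilon> a * \<epsilon> b)) \<and>
   (meq T E mone \<longleftrightarrow> (\<forall>a. meq UNIV (PiL sc E \<Delta> \<epsilon> a) (msc sc (\<epsilon> a) mone))) \<and>
   (meq T E mone \<longleftrightarrow> (\<forall>a. meq UNIV (PiR sc E \<Delta> \<epsilon> a) (msc sc (\<epsilon> a) mone)))"
proof (cases "\<exists>p. \<epsilon> p \<noteq> 0")
  case True
  then obtain p where p: "\<epsilon> p \<noteq> 0" by blast
  have "\<epsilon> (sc (inverse (\<epsilon> p)) p) = 1" using p by (simp add: eps_sc)
  thus ?thesis by (rule main_nontriv)
next
  case False thus ?thesis by (intro main_triv) blast
qed

end

theorem theorem2p11: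
  fixes sc :: "'k::field \<Rightarrow> 'a::ring \<Rightarrow> 'a"
    and E :: "('k,'a) t2 mlt"
    and \<Delta> :: "'a \<Rightarrow> ('k,'a) t2 mlt"
    and \<epsilon> :: "'a \<Rightarrow> 'k"
  assumes "weak_multiplier_bialgebra sc E \<Delta> \<epsilon>"
  shows "(meq (TT2 sc) E mone \<longleftrightarrow> (\<forall>a b. \<epsilon> (a * b) = \<epsilon> a * \<epsilon> b)) \<and>
         (meq (TT2 sc) E mone \<longleftrightarrow> (\<forall>a. meq UNIV (PiL sc E \<Delta> \<epsilon> a) (msc sc (\<epsilon> a) mone))) \<and>
         (meq (TT2 sc) E mone \<longleftrightarrow> (\<forall>a. meq UNIV (PiR sc E \<Delta> \<epsilon> a) (msc sc (\<epsilon> a) mone)))"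
proof -
  interpret wmb sc E \<Delta> \<epsilon> by unfold_locales (rule assms)
  show ?thesis by (rule main)
qed


end
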